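(* (1) For disjoint finite $X,Y$, $f\in\mathrm{Bool}(X)$, $g\in\mathrm{Bool}(Y)$: $\mathcal{E}^S(f\star_1g)=\{\sim_X\sqcup\sim_Y\mid\sim_X\in\mathcal{E}^S(f),\ \sim_Y\in\mathcal{E}^S(g)\}$. (2) For $f\in\mathrm{Bool}(X)$ and equivalences $\sim\subseteq\sim'$ on $X$, the following are equivalent: (a) $\sim\in\mathcal{E}^S(f)$ and $\overline{\sim'}\in\mathcal{E}^S(f/{\sim})$; (b) $\sim'\in\mathcal{E}^S(f)$ and $\sim\in\mathcal{E}^S(f\mid\sim')$. (3) For $f\in\mathrm{Bool}(X)$: $=_X$ and $\sim_f^i$ belong to $\mathcal{E}^S(f)$; for $\sim\in\mathcal{E}^S(f)$, $f\mid\sim$ is modular iff $\sim$ is $=_X$, and $f/{\sim}$ is modular iff $\sim=\sim_f^i$. (4) The analogue of the restriction property fails: there exist finite disjoint $X,Y$, $f\in\mathrm{Bool}(X\sqcup Y)$ and equivalences $\sim_X,\sim_Y$ such that $\sim_X\in\mathcal{E}^S(f_{\mid X})$, $\sim_Y\in\mathcal{E}^S(f_{\mid Y})$ but $\sim_X\sqcup\sim_Y\notin\mathcal{E}^S(f)$, and also examples where $\sim_X\sqcup\sim_Y\in\mathcal{E}^S(f)$ but $\sim_X\notin\mathcal{E}^S(f_{\mid X})$.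
   Context: A boolean function on a finite set $X$ is a map $f:\mathcal{P}(X)\to\mathbb{Z}$ with $f(\emptyset)=0$; $\mathrm{Bool}(X)$ is their set; $f_{\mid Y}$ is the restriction to $\mathcal{P}(Y)$. For disjoint $X,Y$, $(f\star_1g)(A)=f(A\cap X)+g(A\cap Y)$ (associative, commutative, unit $1\in\mathrm{Bool}(\emptyset)$). For nonempty $X$, $f$ is indecomposable if $f=f'\star_1f''$ with $f'\in\mathrm{Bool}(X\setminus Y)$, $f''\in\mathrm{Bool}(Y)$ forces $Y\in\{\emptyset,X\}$. Each $f$ determines a unique equivalence $\sim_f^i$ with $f=\prod^{\star_1}_{Y\in X/\sim_f^i}f_{\mid Y}$ and each $f_{\mid Y}$ indecomposable; $\mathrm{ic}(f)=|X/\sim_f^i|$. $f$ is modular if $f(A)=\sum_{x\in A}f(\{x\})$ for all $A$. For an equivalence $\sim$ on $X$: $\mathrm{cl}(\sim)=|X/{\sim}|$, $\varpi_\sim$ the canonical surjection, $f/{\sim}(A)=f(\varpi_\sim^{-1}(A))$, $(f\mid\sim)(A)=\sum_{Y\in X/\sim}f(A\cap Y)$. If $\sim\subseteq\sim'$, $\overline{\sim'}$ is the equivalence on $X/{\sim}$ with $\varpi_\sim(x)\,\overline{\sim'}\,\varpi_\sim(y)\iff x\sim'y$. $=_X$ is the equality relation. $\mathcal{E}^W(f)=\{\sim:\mathrm{ic}(f\mid\sim)=\mathrm{cl}(\sim)\}$ and $\mathcal{E}^S(f)=\{\sim\in\mathcal{E}^W(f):\mathrm{ic}(f/{\sim})=\mathrm{ic}(f)\}$.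 *)

theory Defs
  imports Main
begin

(* A boolean function on X: f :: 'a set => int with f {} = 0, made extensional
   (value 0 outside Pow X) so that equality of boolean functions is meaningful. *)
definition bool_fun :: "'a set \<Rightarrow> ('a set \<Rightarrow> int) \<Rightarrow> bool" where
  "bool_fun X f \<longleftrightarrow> f {} = 0 \<and> (\<forall>A. \<not> A \<subseteq> X \<longrightarrow> f A = 0)"

definition restr :: "('a set \<Rightarrow> int) \<Rightarrow> 'a set \<Rightarrow> ('a set \<Rightarrow> int)" where
  "restr f Y = (\<lambda>A. if A \<subseteq> Y then f A else 0)"

definition star1 :: "'a set \<Rightarrow> 'a set \<Rightarrow> ('a set \<Rightarrow> int) \<Rightarrow> ('a set \<Rightarrow> int) \<Rightarrow> ('a set \<Rightarrow> int)" where
  "star1 X Y f g = (\<lambda>A. if A \<subseteq> X \<union> Y then f (A \<inter> X) + g (A \<inter> Y) else 0)"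

definition indecomposable :: "'a set \<Rightarrow> ('a set \<Rightarrow> int) \<Rightarrow> bool" where
  "indecomposable X f \<longleftrightarrow> X \<noteq> {} \<and>
     (\<forall>Y f' f''. Y \<subseteq> X \<and> bool_fun (X - Y) f' \<and> bool_fun Y f'' \<and> f = star1 (X - Y) Y f' f''
        \<longrightarrow> Y = {} \<or> Y = X)"

definition condf :: "'a set \<Rightarrow> ('a \<times> 'a) set \<Rightarrow> ('a set \<Rightarrow> int) \<Rightarrow> ('a set \<Rightarrow> int)" where
  "condf X R f = (\<lambda>A. if A \<subseteq> X then (\<Sum>Y\<in>X // R. f (A \<inter> Y)) else 0)"

definition proj :: "('a \<times> 'a) set \<Rightarrow> 'a \<Rightarrow> 'a set" where
  "proj R x = R `` {x}"

definition quotf :: "'a set \<Rightarrow> ('a \<times> 'a) set \<Rightarrow> ('a set \<Rightarrow> int) \<Rightarrow> ('a set set \<Rightarrow> int)" where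
  "quotf X R f = (\<lambda>B. if B \<subseteq> X // R then f {x \<in> X. proj R x \<in> B} else 0)"

definition ic_rel :: "'a set \<Rightarrow> ('a set \<Rightarrow> int) \<Rightarrow> ('a \<times> 'a) set" where
  "ic_rel X f = (THE R. equiv X R \<and>
      (\<forall>A. A \<subseteq> X \<longrightarrow> f A = (\<Sum>Y\<in>X // R. restr f Y (A \<inter> Y))) \<and>
      (\<forall>Y\<in>X // R. indecomposable Y (restr f Y)))"

definition ic :: "'a set \<Rightarrow> ('a set \<Rightarrow> int) \<Rightarrow> nat" where
  "ic X f = card (X // ic_rel X f)"

definition modular :: "'a set \<Rightarrow> ('a set \<Rightarrow> int) \<Rightarrow> bool" where
  "modular X f \<longleftrightarrow> (\<forall>A. A \<subseteq> X \<longrightarrow> f A = (\<Sum>x\<in>A. f {x}))"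

definition cl :: "'a set \<Rightarrow> ('a \<times> 'a) set \<Rightarrow> nat" where
  "cl X R = card (X // R)"

definition bar_rel :: "'a set \<Rightarrow> ('a \<times> 'a) set \<Rightarrow> ('a \<times> 'a) set \<Rightarrow> ('a set \<times> 'a set) set" where
  "bar_rel X R R' = {(proj R x, proj R y) | x y. x \<in> X \<and> y \<in> X \<and> (x, y) \<in> R'}"

definition EW :: "'a set \<Rightarrow> ('a set \<Rightarrow> int) \<Rightarrow> ('a \<times> 'a) set set" where
  "EW X f = {R. equiv X R \<and> ic X (condf X R f) = cl X R}"

definition ES :: "'a set \<Rightarrow> ('a set \<Rightarrow> int) \<Rightarrow> ('a \<times> 'a) set set" where
  "ES X f = {R \<in> EW X f. ic (X // R) (quotf X R f) = ic X f}"

end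

theory Submission
  imports Defs "HOL-Library.Disjoint_Sets"
begin

definition sep :: "'a set \<Rightarrow> ('a set \<Rightarrow> int) \<Rightarrow> 'a set \<Rightarrow> bool" where
  "sep X f S \<longleftrightarrow> S \<subseteq> X \<and> (\<forall>A. A \<subseteq> X \<longrightarrow> f A = f (A \<inter> S) + f (A - S))"

definition indec :: "'a set \<Rightarrow> ('a set \<Rightarrow> int) \<Rightarrow> bool" where
  "indec Y f \<longleftrightarrow> Y \<noteq> {} \<and> (\<forall>T. sep Y f T \<longrightarrow> T = {} \<or> T = Y)"

definition good :: "'a set \<Rightarrow> ('a set \<Rightarrow> int) \<Rightarrow> 'a set set \<Rightarrow> bool" where
  "good X f P \<longleftrightarrow> partition_on X P \<and> (\<forall>Y\<in>P. sep X f Y \<and> indec Y f)"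

definition prel :: "'a set set \<Rightarrow> ('a \<times> 'a) set" where
  "prel P = {(x, y). \<exists>p\<in>P. x \<in> p \<and> y \<in> p}"

lemma sep_empty: "f {} = 0 \<Longrightarrow> sep X f {}"
  by (simp add: sep_def)

lemma sep_full: "f {} = 0 \<Longrightarrow> sep X f X"
  unfolding sep_def by (auto simp: Int_absorb2 Diff_eq_empty_iff[THEN iffD2])

lemma sep_compl: "sep X f S \<Longrightarrow> sep X f (X - S)"
  unfolding sep_def
proof (intro conjI allI impI)
  fix A assume h: "S \<subseteq> X \<and> (\<forall>A. A \<subseteq> X \<longrightarrow> f A = f (A \<inter> S) + f (A - S))" "A \<subseteq> X"
  then have "A \<inter> (X - S) = A - S" "A - (X - S) = A \<inter> S" by auto
  then show "f A = f (A \<inter> (X - S)) + f (A - (X - S))" using h by simp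
qed auto

lemma sep_trans:
  assumes "sep X f S" "sep S f T" shows "sep X f T"
  unfolding sep_def
proof (intro conjI allI impI)
  show "T \<subseteq> X" using assms by (auto simp: sep_def)
  fix A assume A: "A \<subseteq> X"
  have TS: "T \<subseteq> S" "S \<subseteq> X" using assms by (auto simp: sep_def)
  have 1: "f A = f (A \<inter> S) + f (A - S)" using assms A by (auto simp: sep_def)
  have 2: "f (A \<inter> S) = f (A \<inter> S \<inter> T) + f (A \<inter> S - T)" using assms(2) by (auto simp: sep_def)
  have "A - T \<subseteq> X" using A by auto
  then have 3: "f (A - T) = f ((A - T) \<inter> S) + f (A - T - S)" using assms(1) unfolding sep_def by blast
  have e1: "A \<inter> S \<inter> T = A \<inter> T" "(A - T) \<inter> S = A \<inter> S - T" "A - T - S = A - S" using TS by auto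
  show "f A = f (A \<inter> T) + f (A - T)" using 1 2 3 e1 by simp
qed

lemma sep_sub:
  assumes "sep X f S" "Y \<subseteq> X" shows "sep Y f (S \<inter> Y)"
  unfolding sep_def
proof (intro conjI allI impI)
  fix A assume A: "A \<subseteq> Y"
  then have "A \<inter> (S \<inter> Y) = A \<inter> S" "A - S \<inter> Y = A - S" by auto
  then show "f A = f (A \<inter> (S \<inter> Y)) + f (A - S \<inter> Y)" using assms A by (auto simp: sep_def)
qed auto

lemma sep_mono_dom:
  assumes "sep X f T" "T \<subseteq> Y" "Y \<subseteq> X" shows "sep Y f T"
  using sep_sub[OF assms(1,3)] assms(2) by (simp add: Int_absorb2)

lemma sep_Int:
  assumes "sep X f S" "sep X f T" shows "sep X f (S \<inter> T)"
proof -
  have "S \<subseteq> X" using assms by (auto simp: sep_def)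
  have "sep S f (T \<inter> S)" using sep_sub[OF assms(2) \<open>S \<subseteq> X\<close>] .
  from sep_trans[OF assms(1) this] show ?thesis by (simp add: Int_commute)
qed

lemma sep_cong:
  assumes "\<And>A. A \<subseteq> X \<Longrightarrow> f A = g A"
  shows "sep X f S \<longleftrightarrow> sep X g S"
proof -
  have "\<forall>A. A \<subseteq> X \<longrightarrow> (f A = f (A \<inter> S) + f (A - S)) = (g A = g (A \<inter> S) + g (A - S))"
  proof (intro allI impI)
    fix A assume "A \<subseteq> X"
    moreover have "A \<inter> S \<subseteq> X" "A - S \<subseteq> X" using \<open>A \<subseteq> X\<close> by auto
    ultimately show "(f A = f (A \<inter> S) + f (A - S)) = (g A = g (A \<inter> S) + g (A - S))"
      using assms by simp
  qed
  then show ?thesis unfolding sep_def by blast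
qed

lemma indec_cong:
  assumes "\<And>A. A \<subseteq> X \<Longrightarrow> f A = g A"
  shows "indec X f \<longleftrightarrow> indec X g"
  unfolding indec_def using sep_cong[of X f g, OF assms] by simp

lemma indec_sep_dich:
  assumes "sep X f S" "Y \<subseteq> X" "indec Y f"
  shows "Y \<subseteq> S \<or> Y \<inter> S = {}"
  using sep_sub[OF assms(1,2)] assms(3) unfolding indec_def by blast

lemma sep_pair:
  assumes "sep Y f T" "a \<in> Y" "b \<in> Y" "a \<in> T" "b \<notin> T"
  shows "f {a, b} = f {a} + f {b}"
proof -
  have "{a,b} \<inter> T = {a}" "{a,b} - T = {b}" using assms by auto
  then show ?thesis using assms unfolding sep_def by (metis empty_subsetI insert_subset)
qed

lemma indec_singleton: "indec {a} f"
  unfolding indec_def sep_def by auto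

lemma indecomposable_iff:
  assumes f0: "f {} = 0"
  shows "indecomposable Y (restr f Y) \<longleftrightarrow> indec Y f"
proof
  assume h: "indecomposable Y (restr f Y)"
  show "indec Y f" unfolding indec_def
  proof (intro conjI allI impI)
    show "Y \<noteq> {}" using h by (simp add: indecomposable_def)
    fix T assume T: "sep Y f T"
    then have TY: "T \<subseteq> Y" by (simp add: sep_def)
    have b1: "bool_fun (Y - T) (restr f (Y - T))" using f0 by (auto simp: bool_fun_def restr_def)
    have b2: "bool_fun T (restr f T)" using f0 by (auto simp: bool_fun_def restr_def)
    have eq: "restr f Y = star1 (Y - T) T (restr f (Y - T)) (restr f T)"
    proof
      fix A
      show "restr f Y A = star1 (Y - T) T (restr f (Y - T)) (restr f T) A"
      proof (cases "A \<subseteq> Y")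
        case True
        then have "A \<inter> (Y - T) = A - T" by auto
        then show ?thesis using True T TY unfolding restr_def star1_def sep_def
          by (auto simp: Un_absorb2 Int_commute)
      next
        case False
        then show ?thesis using TY unfolding restr_def star1_def by (auto simp: Un_absorb2)
      qed
    qed
    show "T = {} \<or> T = Y" using h TY b1 b2 eq unfolding indecomposable_def by blast
  qed
next
  assume h: "indec Y f"
  show "indecomposable Y (restr f Y)" unfolding indecomposable_def
  proof (intro conjI allI impI)
    show "Y \<noteq> {}" using h by (simp add: indec_def)
    fix Y' f' f'' assume H: "Y' \<subseteq> Y \<and> bool_fun (Y - Y') f' \<and> bool_fun Y' f'' \<and>
        restr f Y = star1 (Y - Y') Y' f' f''"
    have U: "Y - Y' \<union> Y' = Y" using H by auto
    have val: "f A = f' (A \<inter> (Y - Y')) + f'' (A \<inter> Y')" if "A \<subseteq> Y" for A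
    proof -
      have "restr f Y A = star1 (Y - Y') Y' f' f'' A" using H by simp
      then show ?thesis using that U by (simp add: restr_def star1_def)
    qed
    have "sep Y f Y'"
      unfolding sep_def
    proof (intro conjI allI impI)
      show "Y' \<subseteq> Y" using H by simp
      fix A assume A: "A \<subseteq> Y"
      have "A \<inter> Y' \<subseteq> Y" using A by auto
      from val[OF this] have "f (A \<inter> Y') = f' (A \<inter> Y' \<inter> (Y - Y')) + f'' (A \<inter> Y' \<inter> Y')" by simp
      also have "A \<inter> Y' \<inter> (Y - Y') = {}" by auto
      also have "A \<inter> Y' \<inter> Y' = A \<inter> Y'" by auto
      finally have 1: "f (A \<inter> Y') = f'' (A \<inter> Y')" using H by (simp add: bool_fun_def)
      have "A - Y' \<subseteq> Y" using A by auto
      from val[OF this] have "f (A - Y') = f' ((A - Y') \<inter> (Y - Y')) + f'' ((A - Y') \<inter> Y')" by simp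
      also have "(A - Y') \<inter> Y' = {}" by auto
      also have "(A - Y') \<inter> (Y - Y') = A \<inter> (Y - Y')" using A by auto
      finally have 2: "f (A - Y') = f' (A \<inter> (Y - Y'))" using H by (simp add: bool_fun_def)
      show "f A = f (A \<inter> Y') + f (A - Y')" using val[OF A] 1 2 by simp
    qed
    then show "Y' = {} \<or> Y' = Y" using h by (simp add: indec_def)
  qed
qed


lemma sep_sum:
  assumes "finite P" "disjoint P" "\<forall>Y\<in>P. sep X f Y" "f {} = 0" "A \<subseteq> X"
  shows "f (A \<inter> \<Union>P) = (\<Sum>Y\<in>P. f (A \<inter> Y))"
  using assms
proof (induction P rule: finite_induct)
  case empty
  then show ?case by simp
next
  case (insert Y P)
  have dP: "disjoint P" using insert.prems by (auto simp: pairwise_insert)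
  have IH: "f (A \<inter> \<Union>P) = (\<Sum>Y\<in>P. f (A \<inter> Y))" using insert dP by auto
  have sY: "sep X f Y" using insert.prems by auto
  have sub: "A \<inter> \<Union>(insert Y P) \<subseteq> X" using insert.prems by auto
  have e1: "A \<inter> \<Union>(insert Y P) \<inter> Y = A \<inter> Y" by auto
  have dj: "\<forall>Z\<in>P. Y \<inter> Z = {}" using insert.prems insert.hyps
    by (auto simp: pairwise_insert disjnt_def)
  have e2: "A \<inter> \<Union>(insert Y P) - Y = A \<inter> \<Union>P" using dj by auto
  have "f (A \<inter> \<Union>(insert Y P)) = f (A \<inter> \<Union>(insert Y P) \<inter> Y) + f (A \<inter> \<Union>(insert Y P) - Y)"
    using sY sub unfolding sep_def by blast
  then have "f (A \<inter> \<Union>(insert Y P)) = f (A \<inter> Y) + f (A \<inter> \<Union>P)"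
    by (simp only: e1 e2)
  moreover have "(\<Sum>Y\<in>insert Y P. f (A \<inter> Y)) = f (A \<inter> Y) + (\<Sum>Y\<in>P. f (A \<inter> Y))"
    using insert.hyps by (rule sum.insert)
  ultimately show ?case using IH by simp
qed

lemma sep_sum_part:
  assumes "finite X" "partition_on X P" "\<forall>Y\<in>P. sep X f Y" "f {} = 0" "A \<subseteq> X"
  shows "f A = (\<Sum>Y\<in>P. f (A \<inter> Y))"
proof -
  have "finite P" using assms finite_elements by blast
  moreover have "\<Union>P = X" using assms by (simp add: partition_on_def)
  moreover have "A \<inter> X = A" using assms by auto
  ultimately show ?thesis using sep_sum[of P X f A] assms by (auto simp: partition_on_def)
qed

lemma sum_sep_part:
  assumes "finite X" "partition_on X P" "f {} = 0"
    "\<And>A. A \<subseteq> X \<Longrightarrow> f A = (\<Sum>Y\<in>P. f (A \<inter> Y))" "Y0 \<in> P"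
  shows "sep X f Y0"
  unfolding sep_def
proof (intro conjI allI impI)
  have fP: "finite P" using assms(1,2) finite_elements by blast
  show "Y0 \<subseteq> X" using assms(2,5) by (auto simp: partition_on_def)
  fix A assume A: "A \<subseteq> X"
  have dj: "\<And>Y. Y \<in> P \<Longrightarrow> Y \<noteq> Y0 \<Longrightarrow> Y \<inter> Y0 = {}"
    using assms(2,5) by (auto simp: partition_on_def pairwise_def disjnt_def)
  have 1: "f A = f (A \<inter> Y0) + (\<Sum>Y\<in>P - {Y0}. f (A \<inter> Y))"
    using assms(4)[OF A] sum.remove[OF fP assms(5), of "\<lambda>Y. f (A \<inter> Y)"] by simp
  have "A - Y0 \<subseteq> X" using A by auto
  then have "f (A - Y0) = (\<Sum>Y\<in>P. f ((A - Y0) \<inter> Y))" using assms(4) by blast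
  also have "\<dots> = f ((A - Y0) \<inter> Y0) + (\<Sum>Y\<in>P - {Y0}. f ((A - Y0) \<inter> Y))"
    by (rule sum.remove[OF fP assms(5)])
  also have "(\<Sum>Y\<in>P - {Y0}. f ((A - Y0) \<inter> Y)) = (\<Sum>Y\<in>P - {Y0}. f (A \<inter> Y))"
  proof (rule sum.cong)
    fix Y assume "Y \<in> P - {Y0}"
    then have "(A - Y0) \<inter> Y = A \<inter> Y" using dj by auto
    then show "f ((A - Y0) \<inter> Y) = f (A \<inter> Y)" by simp
  qed simp
  also have "(A - Y0) \<inter> Y0 = {}" by auto
  finally show "f A = f (A \<inter> Y0) + f (A - Y0)" using 1 assms(3) by simp
qed

lemma prel_equiv: "equiv X R \<Longrightarrow> R = prel (X // R)"
  unfolding prel_def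
proof safe
  fix x y assume "equiv X R" "(x, y) \<in> R"
  then show "\<exists>p\<in>X // R. x \<in> p \<and> y \<in> p"
  proof (intro bexI[of _ "R `` {x}"] conjI)
    have "x \<in> X" using \<open>equiv X R\<close> \<open>(x, y) \<in> R\<close> equiv_type by blast
    then show "R `` {x} \<in> X // R" by (rule quotientI)
    show "x \<in> R `` {x}" using \<open>equiv X R\<close> \<open>x \<in> X\<close> equiv_class_self by metis
    show "y \<in> R `` {x}" using \<open>(x, y) \<in> R\<close> by simp
  qed
next
  fix x y p assume "equiv X R" "p \<in> X // R" "x \<in> p" "y \<in> p"
  then show "(x, y) \<in> R" using in_quotient_imp_in_rel by fastforce
qed

lemma prel_partition:
  assumes "partition_on X P" shows "equiv X (prel P)" "X // prel P = P"
  unfolding prel_def by (rule equiv_partition_on[OF assms], rule partition_on_eq_quotient[OF assms])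

lemma good_unique:
  assumes "good X f P" "good X f Q" shows "P \<subseteq> Q"
proof
  fix Y assume Y: "Y \<in> P"
  have PX: "partition_on X P" "partition_on X Q" using assms by (auto simp: good_def)
  have "Y \<noteq> {}" using Y PX by (auto simp: partition_on_def)
  then obtain y where y: "y \<in> Y" by auto
  then have "y \<in> X" using Y PX by (auto simp: partition_on_def)
  then obtain Z where Z: "Z \<in> Q" "y \<in> Z" using PX by (auto simp: partition_on_def)
  have YX: "Y \<subseteq> X" "Z \<subseteq> X" using Y Z PX by (auto simp: partition_on_def)
  have "Y \<subseteq> Z \<or> Y \<inter> Z = {}"
    using indec_sep_dich[of X f Z Y] assms Y Z YX by (auto simp: good_def)
  then have YZ: "Y \<subseteq> Z" using y Z by auto
  have "Z \<subseteq> Y \<or> Z \<inter> Y = {}"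
    using indec_sep_dich[of X f Y Z] assms Y Z YX by (auto simp: good_def)
  then have "Z \<subseteq> Y" using y Z by auto
  with YZ Z show "Y \<in> Q" by auto
qed

lemma good_exists:
  assumes "finite X" "f {} = 0" shows "\<exists>P. good X f P"
  using assms
proof (induction X rule: finite_psubset_induct)
  case (psubset X)
  show ?case
  proof (cases "X = {}")
    case True
    then show ?thesis by (intro exI[of _ "{}"]) (simp add: good_def partition_on_empty)
  next
    case ne: False
    show ?thesis
    proof (cases "indec X f")
      case True
      then show ?thesis using ne psubset.prems
        by (intro exI[of _ "{X}"]) (simp add: good_def partition_on_space sep_full)
    next
      case False
      then obtain T where T: "sep X f T" "T \<noteq> {}" "T \<noteq> X" using ne by (auto simp: indec_def)
      have TX: "T \<subseteq> X" using T by (simp add: sep_def)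
      then have ps: "T \<subset> X" "X - T \<subset> X" using T by auto
      obtain P1 where P1: "good T f P1" using psubset.IH[OF ps(1)] psubset.prems by auto
      obtain P2 where P2: "good (X - T) f P2" using psubset.IH[OF ps(2)] psubset.prems by auto
      have T2: "sep X f (X - T)" using sep_compl[OF T(1)] .
      have "good X f (P1 \<union> P2)"
        unfolding good_def
      proof (intro conjI ballI)
        show "partition_on X (P1 \<union> P2)"
        proof (rule partition_onI)
          show "\<Union>(P1 \<union> P2) = X" using P1 P2 TX by (auto simp: good_def partition_on_def)
          show "{} \<notin> P1 \<union> P2" using P1 P2 by (auto simp: good_def partition_on_def)
          fix p q assume pq: "p \<in> P1 \<union> P2" "q \<in> P1 \<union> P2" "p \<noteq> q"
          have s1: "\<forall>p\<in>P1. p \<subseteq> T" "\<forall>p\<in>P2. p \<subseteq> X - T"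
            using P1 P2 by (auto simp: good_def partition_on_def)
          have d1: "disjoint P1" "disjoint P2" using P1 P2 by (auto simp: good_def partition_on_def)
          show "disjnt p q"
          proof (cases "p \<in> P1")
            case True
            show ?thesis
            proof (cases "q \<in> P1")
              case True
              then show ?thesis using \<open>p \<in> P1\<close> pq(3) d1(1) unfolding pairwise_def by blast
            next
              case False
              then have "q \<subseteq> X - T" using pq(2) s1 by blast
              moreover have "p \<subseteq> T" using True s1 by blast
              ultimately show ?thesis unfolding disjnt_def by blast
            qed
          next
            case False
            then have pP2: "p \<in> P2" "p \<subseteq> X - T" using pq(1) s1 by blast+
            show ?thesis
            proof (cases "q \<in> P1")
              case True
              then have "q \<subseteq> T" using s1 by blast
              then show ?thesis using pP2 unfolding disjnt_def by blast
            next
              case False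
              then have "q \<in> P2" using pq(2) by blast
              then show ?thesis using pP2 pq(3) d1(2) unfolding pairwise_def by blast
            qed
          qed
        qed
      next
        fix Y assume Y: "Y \<in> P1 \<union> P2"
        show "sep X f Y"
          using Y P1 P2 sep_trans[OF T(1)] sep_trans[OF T2] by (auto simp: good_def)
        show "indec Y f" using Y P1 P2 by (auto simp: good_def)
      qed
      then show ?thesis by blast
    qed
  qed
qed

lemma ic_pred_iff:
  assumes "finite X" "f {} = 0"
  shows "(equiv X R \<and> (\<forall>A. A \<subseteq> X \<longrightarrow> f A = (\<Sum>Y\<in>X // R. restr f Y (A \<inter> Y))) \<and>
      (\<forall>Y\<in>X // R. indecomposable Y (restr f Y))) \<longleftrightarrow> equiv X R \<and> good X f (X // R)"
proof -
  have r: "restr f Y (A \<inter> Y) = f (A \<inter> Y)" for Y A by (simp add: restr_def)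
  show ?thesis
  proof (cases "equiv X R")
    case True
    have p: "partition_on X (X // R)" using partition_on_quotient[OF True] .
    have "(\<forall>A. A \<subseteq> X \<longrightarrow> f A = (\<Sum>Y\<in>X // R. f (A \<inter> Y))) \<longleftrightarrow> (\<forall>Y\<in>X//R. sep X f Y)"
      using sep_sum_part[of X "X // R" f, OF assms(1) p _ assms(2)] sum_sep_part[of X "X // R" f, OF assms(1) p assms(2)] by blast
    then show ?thesis using True p by (simp add: r good_def indecomposable_iff[of f, OF assms(2)] ball_conj_distrib)
  qed simp
qed

lemma ic_rel_char:
  assumes "finite X" "f {} = 0"
  shows "equiv X (ic_rel X f)" "good X f (X // ic_rel X f)"
proof -
  obtain P where P: "good X f P" using good_exists[of X f, OF assms] by blast
  let ?R = "prel P"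
  have pp: "partition_on X P" using P by (simp add: good_def)
  have e: "equiv X ?R" "X // ?R = P" using prel_partition[OF pp] by auto
  have ex: "equiv X ?R \<and> good X f (X // ?R)" using e P by simp
  have un: "R = ?R" if "equiv X R \<and> good X f (X // R)" for R
  proof -
    have "X // R = P" using good_unique[of X f P "X // R"] good_unique[of X f "X // R" P] that P by auto
    then show ?thesis using prel_equiv[of X R] that by simp
  qed
  have "ic_rel X f = ?R"
    unfolding ic_rel_def ic_pred_iff[of X f, OF assms]
  proof (rule the_equality)
    show "equiv X ?R \<and> good X f (X // ?R)" by (rule ex)
    fix R assume "equiv X R \<and> good X f (X // R)"
    then show "R = ?R" by (rule un)
  qed
  then show "equiv X (ic_rel X f)" "good X f (X // ic_rel X f)" using ex by auto
qed

lemma good_comps: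
  assumes "finite X" "f {} = 0" "good X f P"
  shows "X // ic_rel X f = P"
  using good_unique[OF assms(3) ic_rel_char(2)[of X f, OF assms(1,2)]]
    good_unique[OF ic_rel_char(2)[of X f, OF assms(1,2)] assms(3)] by auto

lemma good_ic:
  assumes "finite X" "f {} = 0" "good X f P"
  shows "ic X f = card P"
  using good_comps[of X f P, OF assms] by (simp add: ic_def)

lemma ic_rel_cong:
  assumes "\<And>A. A \<subseteq> X \<Longrightarrow> f A = g A"
  shows "ic_rel X f = ic_rel X g"
proof -
  have rr: "restr f Y = restr g Y" if "Y \<subseteq> X" for Y
    using assms that by (auto simp: restr_def)
  have qq: "\<And>R Y. equiv X R \<Longrightarrow> Y \<in> X // R \<Longrightarrow> restr f Y = restr g Y"
    using rr in_quotient_imp_subset by blast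
  have eqv: "(equiv X R \<and> (\<forall>A. A \<subseteq> X \<longrightarrow> f A = (\<Sum>Y\<in>X // R. restr f Y (A \<inter> Y))) \<and>
      (\<forall>Y\<in>X // R. indecomposable Y (restr f Y))) \<longleftrightarrow>
     (equiv X R \<and> (\<forall>A. A \<subseteq> X \<longrightarrow> g A = (\<Sum>Y\<in>X // R. restr g Y (A \<inter> Y))) \<and>
      (\<forall>Y\<in>X // R. indecomposable Y (restr g Y)))" for R
  proof (cases "equiv X R")
    case True
    then show ?thesis using assms qq[OF True] by (auto cong: sum.cong)
  qed simp
  show ?thesis unfolding ic_rel_def eqv ..
qed

lemma ic_cong:
  assumes "\<And>A. A \<subseteq> X \<Longrightarrow> f A = g A"
  shows "ic X f = ic X g"
  using ic_rel_cong[of X f g, OF assms] by (simp add: ic_def)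

lemma ic_empty: "ic {} f = 0"
  by (simp add: ic_def)

lemma ic_indec:
  assumes "finite X" "f {} = 0" "X \<noteq> {}"
  shows "1 \<le> ic X f" "ic X f = 1 \<longleftrightarrow> indec X f"
proof -
  have g: "good X f (X // ic_rel X f)" using ic_rel_char[of X f, OF assms(1,2)] by simp
  have e: "equiv X (ic_rel X f)" using ic_rel_char[of X f, OF assms(1,2)] by simp
  have fin: "finite (X // ic_rel X f)" using finite_quotient[OF assms(1)] e by (simp add: equiv_type)
  have ne: "X // ic_rel X f \<noteq> {}" using assms by simp
  show "1 \<le> ic X f" using fin ne by (simp add: ic_def Suc_le_eq card_gt_0_iff)
  show "ic X f = 1 \<longleftrightarrow> indec X f"
  proof
    assume "ic X f = 1"
    then obtain C where C: "X // ic_rel X f = {C}" by (auto simp: ic_def card_1_singleton_iff)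
    then have "C = X" using Union_quotient[OF e] by auto
    then show "indec X f" using g C by (simp add: good_def)
  next
    assume "indec X f"
    then have "good X f {X}" using assms by (simp add: good_def partition_on_space sep_full)
    then show "ic X f = 1" using good_ic[of X f, OF assms(1,2)] by simp
  qed
qed


lemma part_sub: "partition_on X P \<Longrightarrow> Y \<in> P \<Longrightarrow> Y \<subseteq> X"
  by (auto simp: partition_on_def)

lemma part_ne: "partition_on X P \<Longrightarrow> Y \<in> P \<Longrightarrow> Y \<noteq> {}"
  by (auto simp: partition_on_def)

lemma part_dj: "partition_on X P \<Longrightarrow> Y \<in> P \<Longrightarrow> Z \<in> P \<Longrightarrow> Y \<noteq> Z \<Longrightarrow> Y \<inter> Z = {}"
  by (auto simp: partition_on_def pairwise_def disjnt_def)

lemma part_cover: "partition_on X P \<Longrightarrow> x \<in> X \<Longrightarrow> \<exists>Y\<in>P. x \<in> Y"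
  by (auto simp: partition_on_def)

lemma ic_sum:
  assumes fin: "finite X" and f0: "f {} = 0" and P: "partition_on X P" and sP: "\<forall>Y\<in>P. sep X f Y"
  shows "ic X f = (\<Sum>Y\<in>P. ic Y f)"
proof -
  define Q where "Q Y = Y // ic_rel Y f" for Y
  have fY: "finite Y" if "Y \<in> P" for Y using part_sub[OF P that] fin finite_subset by blast
  have gQ: "good Y f (Q Y)" if "Y \<in> P" for Y
    unfolding Q_def using ic_rel_char(2)[of Y f, OF fY[OF that] f0] .
  have pQ: "partition_on Y (Q Y)" if "Y \<in> P" for Y using gQ[OF that] by (simp add: good_def)
  have g: "good X f (\<Union>Y\<in>P. Q Y)"
    unfolding good_def
  proof (intro conjI ballI)
    show "partition_on X (\<Union>Y\<in>P. Q Y)"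
    proof (rule partition_onI)
      have "\<Union>(Q Y) = Y" if "Y \<in> P" for Y using pQ[OF that] by (simp add: partition_on_def)
      then have "\<Union>(\<Union>Y\<in>P. Q Y) = (\<Union>Y\<in>P. Y)" by blast
      then show "\<Union>(\<Union>Y\<in>P. Q Y) = X" using P by (simp add: partition_on_def)
      show "{} \<notin> (\<Union>Y\<in>P. Q Y)" using pQ by (auto simp: partition_on_def)
      fix p q assume pq: "p \<in> (\<Union>Y\<in>P. Q Y)" "q \<in> (\<Union>Y\<in>P. Q Y)" "p \<noteq> q"
      then obtain Y1 Y2 where Y: "Y1 \<in> P" "p \<in> Q Y1" "Y2 \<in> P" "q \<in> Q Y2" by blast
      show "disjnt p q"
      proof (cases "Y1 = Y2")
        case True
        then show ?thesis using part_dj[OF pQ[OF Y(1)] Y(2)] Y pq(3) by (simp add: disjnt_def)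
      next
        case False
        have "p \<subseteq> Y1" "q \<subseteq> Y2" using part_sub[OF pQ[OF Y(1)] Y(2)] part_sub[OF pQ[OF Y(3)] Y(4)] .
        then show ?thesis using part_dj[OF P Y(1) Y(3) False] by (auto simp: disjnt_def)
      qed
    qed
  next
    fix C assume "C \<in> (\<Union>Y\<in>P. Q Y)"
    then obtain Y where Y: "Y \<in> P" "C \<in> Q Y" by blast
    show "sep X f C" using sep_trans[of X f Y C] sP Y gQ[OF Y(1)] by (simp add: good_def)
    show "indec C f" using Y gQ[OF Y(1)] by (simp add: good_def)
  qed
  have "ic X f = card (\<Union>Y\<in>P. Q Y)" using good_ic[OF fin, of f, OF f0 g] .
  also have "\<dots> = (\<Sum>Y\<in>P. card (Q Y))"
  proof (rule card_UN_disjoint)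
    show "finite P" using finite_elements[OF fin P] .
    show "\<forall>Y\<in>P. finite (Q Y)" using fY pQ finite_elements by blast
    show "\<forall>i\<in>P. \<forall>j\<in>P. i \<noteq> j \<longrightarrow> Q i \<inter> Q j = {}"
    proof (intro ballI impI)
      fix i j assume ij: "i \<in> P" "j \<in> P" "i \<noteq> j"
      show "Q i \<inter> Q j = {}"
      proof (rule ccontr)
        assume "Q i \<inter> Q j \<noteq> {}"
        then obtain C where C: "C \<in> Q i" "C \<in> Q j" by blast
        have "C \<subseteq> i" "C \<subseteq> j" "C \<noteq> {}" using part_sub[OF pQ[OF ij(1)] C(1)]
            part_sub[OF pQ[OF ij(2)] C(2)] part_ne[OF pQ[OF ij(1)] C(1)] by auto
        then show False using part_dj[OF P ij] by blast
      qed
    qed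
  qed
  also have "\<dots> = (\<Sum>Y\<in>P. ic Y f)" by (simp add: Q_def ic_def)
  finally show ?thesis .
qed

lemma ic_split:
  assumes fin: "finite X" and f0: "f {} = 0" and S: "sep X f S"
  shows "ic X f = ic S f + ic (X - S) f"
proof (cases "S = {}")
  case True then show ?thesis by (simp add: ic_empty)
next
  case ne: False
  show ?thesis
  proof (cases "S = X")
    case True then show ?thesis by (simp add: ic_empty)
  next
    case False
    have SX: "S \<subseteq> X" using S by (simp add: sep_def)
    have p: "partition_on X {S, X - S}"
      using ne False SX by (auto simp: partition_on_def pairwise_def disjnt_def)
    have "ic X f = (\<Sum>Y\<in>{S, X - S}. ic Y f)"
      using ic_sum[OF fin, of f, OF f0 p] S sep_compl[OF S] by simp
    also have "\<dots> = ic S f + ic (X - S) f" using ne SX by (subst sum.insert) auto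
    finally show ?thesis .
  qed
qed

lemma sum_ge1:
  fixes a :: "'i \<Rightarrow> nat"
  assumes "finite I" "\<forall>i\<in>I. 1 \<le> a i"
  shows "card I \<le> sum a I" "sum a I = card I \<longleftrightarrow> (\<forall>i\<in>I. a i = 1)"
proof -
  have e: "sum a I = card I + (\<Sum>i\<in>I. a i - 1)"
  proof -
    have "sum a I = (\<Sum>i\<in>I. 1 + (a i - 1))" using assms(2) by (intro sum.cong) auto
    also have "\<dots> = card I + (\<Sum>i\<in>I. a i - 1)" by (subst sum.distrib) simp
    finally show ?thesis .
  qed
  show "card I \<le> sum a I" using e by simp
  have "sum a I = card I \<longleftrightarrow> (\<Sum>i\<in>I. a i - 1) = 0" using e by simp
  also have "\<dots> \<longleftrightarrow> (\<forall>i\<in>I. a i - 1 = 0)" using assms(1) by simp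
  also have "\<dots> \<longleftrightarrow> (\<forall>i\<in>I. a i = 1)" using assms(2) by (metis diff_is_0_eq le_antisym)
  finally show "sum a I = card I \<longleftrightarrow> (\<forall>i\<in>I. a i = 1)" .
qed

lemma condf_agree:
  assumes fin: "finite X" and f0: "f {} = 0" and e: "equiv X R" and Y: "Y \<in> X // R" and A: "A \<subseteq> Y"
  shows "condf X R f A = f A"
proof -
  have YX: "Y \<subseteq> X" using in_quotient_imp_subset[OF e Y] .
  have fq: "finite (X // R)" using finite_quotient[OF fin] e by (simp add: equiv_type)
  have z: "f (A \<inter> Z) = 0" if "Z \<in> X // R - {Y}" for Z
  proof -
    have "Y \<inter> Z = {}" using quotient_disj[OF e Y, of Z] that by auto
    then have "A \<inter> Z = {}" using A by auto
    then show ?thesis using f0 by simp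
  qed
  have "condf X R f A = (\<Sum>Z\<in>X // R. f (A \<inter> Z))" using A YX by (simp add: condf_def)
  also have "\<dots> = f (A \<inter> Y) + (\<Sum>Z\<in>X // R - {Y}. f (A \<inter> Z))" by (rule sum.remove[OF fq Y])
  also have "(\<Sum>Z\<in>X // R - {Y}. f (A \<inter> Z)) = 0" using z by simp
  also have "A \<inter> Y = A" using A by auto
  finally show ?thesis by simp
qed

lemma condf_0: "f {} = 0 \<Longrightarrow> condf X R f {} = 0"
  by (simp add: condf_def)

lemma condf_sep:
  assumes fin: "finite X" and f0: "f {} = 0" and e: "equiv X R" and Y: "Y \<in> X // R"
  shows "sep X (condf X R f) Y"
proof (rule sum_sep_part[OF fin partition_on_quotient[OF e]])
  show "condf X R f {} = 0" using f0 by (rule condf_0)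
  show "Y \<in> X // R" by (rule Y)
  fix A assume A: "A \<subseteq> X"
  have "condf X R f (A \<inter> Z) = f (A \<inter> Z)" if "Z \<in> X // R" for Z
    using condf_agree[OF fin, of f, OF f0 e that] by simp
  then show "condf X R f A = (\<Sum>Y\<in>X // R. condf X R f (A \<inter> Y))"
    using A by (simp add: condf_def)
qed

lemma ic_condf:
  assumes fin: "finite X" and f0: "f {} = 0" and e: "equiv X R"
  shows "ic X (condf X R f) = (\<Sum>Y\<in>X // R. ic Y f)"
proof -
  have "ic X (condf X R f) = (\<Sum>Y\<in>X // R. ic Y (condf X R f))"
    using ic_sum[OF fin, of "condf X R f", OF condf_0[of f, OF f0] partition_on_quotient[OF e]]
      condf_sep[OF fin, of f, OF f0 e] by blast
  also have "\<dots> = (\<Sum>Y\<in>X // R. ic Y f)"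
    by (intro sum.cong refl ic_cong condf_agree[OF fin, of f, OF f0 e]) auto
  finally show ?thesis .
qed

lemma EW_iff:
  assumes fin: "finite X" and f0: "f {} = 0" and e: "equiv X R"
  shows "R \<in> EW X f \<longleftrightarrow> (\<forall>Y\<in>X // R. indec Y f)"
proof -
  have fq: "finite (X // R)" using finite_quotient[OF fin] e by (simp add: equiv_type)
  have fY: "finite Y" if "Y \<in> X // R" for Y
    using in_quotient_imp_subset[OF e that] fin finite_subset by blast
  have ge: "\<forall>Y\<in>X // R. 1 \<le> ic Y f"
    using ic_indec(1)[OF fY, of _ f, OF _ f0] in_quotient_imp_non_empty[OF e] by blast
  have "R \<in> EW X f \<longleftrightarrow> (\<Sum>Y\<in>X // R. ic Y f) = card (X // R)"
    using e by (simp add: EW_def cl_def ic_condf[OF fin, of f, OF f0 e])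
  also have "\<dots> \<longleftrightarrow> (\<forall>Y\<in>X // R. ic Y f = 1)" using sum_ge1(2)[OF fq ge] .
  also have "\<dots> \<longleftrightarrow> (\<forall>Y\<in>X // R. indec Y f)"
    using ic_indec(2)[OF fY, of _ f, OF _ f0] in_quotient_imp_non_empty[OF e] by blast
  finally show ?thesis .
qed


lemma quot_union:
  assumes e: "equiv X R" and B: "B \<subseteq> X // R"
  shows "{x \<in> X. Defs.proj R x \<in> B} = \<Union>B"
proof safe
  fix x assume "x \<in> X" "Defs.proj R x \<in> B"
  then show "x \<in> \<Union>B" using equiv_class_self[OF e] by (auto simp: Defs.proj_def)
next
  fix x Y assume x: "x \<in> Y" "Y \<in> B"
  then have Y: "Y \<in> X // R" using B by auto
  then obtain y where y: "y \<in> X" "Y = R `` {y}" by (auto elim: quotientE)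
  then have yx: "(y, x) \<in> R" using x by simp
  then show "x \<in> X" using e equiv_type by blast
  have "R `` {x} = R `` {y}" using equiv_class_eq[OF e yx] by simp
  then show "Defs.proj R x \<in> B" using x y by (simp add: Defs.proj_def)
qed

lemma quotf_eq:
  assumes "equiv X R" "B \<subseteq> X // R"
  shows "quotf X R f B = f (\<Union>B)"
  using quot_union[OF assms] assms(2) by (simp add: quotf_def)

lemma quotf_0: "f {} = 0 \<Longrightarrow> quotf X R f {} = 0"
  by (simp add: quotf_def)

lemma quot_sep:
  assumes e: "equiv X R" and U: "U \<subseteq> X // R" and S: "S \<subseteq> U" and s: "sep (\<Union>U) f (\<Union>S)"
  shows "sep U (quotf X R f) S"
  unfolding sep_def
proof (intro conjI allI impI)
  show "S \<subseteq> U" by (rule S)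
  fix B assume B: "B \<subseteq> U"
  have d: "Y = Z" if "Y \<in> X // R" "Z \<in> X // R" "x \<in> Y" "x \<in> Z" for Y Z x
    using quotient_disj[OF e that(1,2)] that(3,4) by blast
  have e1: "\<Union>B \<inter> \<Union>S = \<Union>(B \<inter> S)"
  proof
    show "\<Union>B \<inter> \<Union>S \<subseteq> \<Union>(B \<inter> S)"
    proof
      fix x assume "x \<in> \<Union>B \<inter> \<Union>S"
      then obtain Y Z where "Y \<in> B" "Z \<in> S" "x \<in> Y" "x \<in> Z" by blast
      moreover then have "Y = Z" using d[of Y Z x] B S U by blast
      ultimately show "x \<in> \<Union>(B \<inter> S)" by blast
    qed
  qed blast
  have e2: "\<Union>B - \<Union>S = \<Union>(B - S)"
  proof
    show "\<Union>(B - S) \<subseteq> \<Union>B - \<Union>S"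
    proof
      fix x assume "x \<in> \<Union>(B - S)"
      then obtain Y where Y: "Y \<in> B" "Y \<notin> S" "x \<in> Y" by blast
      have "x \<notin> Z" if "Z \<in> S" for Z using d[of Y Z x] Y that B S U by blast
      then show "x \<in> \<Union>B - \<Union>S" using Y by blast
    qed
  qed blast
  have "\<Union>B \<subseteq> \<Union>U" using B by blast
  then have "f (\<Union>B) = f (\<Union>B \<inter> \<Union>S) + f (\<Union>B - \<Union>S)" using s unfolding sep_def by blast
  moreover have "quotf X R f B = f (\<Union>B)" using quotf_eq[OF e] B U by blast
  moreover have "quotf X R f (B \<inter> S) = f (\<Union>(B \<inter> S))" using quotf_eq[OF e] B U by blast
  moreover have "quotf X R f (B - S) = f (\<Union>(B - S))" using quotf_eq[OF e] B U by blast
  ultimately show "quotf X R f B = quotf X R f (B \<inter> S) + quotf X R f (B - S)"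
    using e1 e2 by simp
qed

definition blk :: "'a set \<Rightarrow> ('a \<times> 'a) set \<Rightarrow> 'a set \<Rightarrow> 'a set set" where
  "blk X R C = {Y \<in> X // R. Y \<subseteq> C}"

lemma blk_union:
  assumes e: "equiv X R" and C: "C \<subseteq> X" and cl: "\<And>Y. Y \<in> X // R \<Longrightarrow> Y \<subseteq> C \<or> Y \<inter> C = {}"
  shows "\<Union>(blk X R C) = C"
proof
  show "\<Union>(blk X R C) \<subseteq> C" by (auto simp: blk_def)
  show "C \<subseteq> \<Union>(blk X R C)"
  proof
    fix c assume c: "c \<in> C"
    then have "c \<in> X" using C by auto
    then have Y: "R `` {c} \<in> X // R" "c \<in> R `` {c}" using quotientI equiv_class_self[OF e] by auto
    then have "R `` {c} \<subseteq> C" using cl[OF Y(1)] c by auto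
    then show "c \<in> \<Union>(blk X R C)" using Y by (auto simp: blk_def)
  qed
qed

lemma quot_ic:
  assumes fin: "finite X" and f0: "f {} = 0" and e: "equiv X R" and ind: "\<forall>Y\<in>X // R. indec Y f"
  shows "ic (X // R) (quotf X R f) = (\<Sum>C\<in>X // ic_rel X f. ic (blk X R C) (quotf X R f))"
    "ic X f \<le> ic (X // R) (quotf X R f)"
    "ic (X // R) (quotf X R f) = ic X f \<longleftrightarrow> (\<forall>C\<in>X // ic_rel X f. indec (blk X R C) (quotf X R f))"
proof -
  let ?K = "X // ic_rel X f"
  let ?g = "quotf X R f"
  have gK: "good X f ?K" using ic_rel_char(2)[OF fin, of f, OF f0] .
  have pK: "partition_on X ?K" using gK by (simp add: good_def)
  have fK: "finite ?K" using finite_elements[OF fin pK] .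
  have fq: "finite (X // R)" using finite_quotient[OF fin] e by (simp add: equiv_type)
  have g0: "?g {} = 0" using f0 by (rule quotf_0)
  have dich: "Y \<subseteq> C \<or> Y \<inter> C = {}" if "Y \<in> X // R" "C \<in> ?K" for Y C
    using indec_sep_dich[of X f C Y] gK that ind in_quotient_imp_subset[OF e] by (auto simp: good_def)
  have bu: "\<Union>(blk X R C) = C" if "C \<in> ?K" for C
    using blk_union[OF e part_sub[OF pK that]] dich that by blast
  have inj: "inj_on (blk X R) ?K" using bu by (metis inj_onI)
  have bsub: "blk X R C \<subseteq> X // R" for C by (auto simp: blk_def)
  have pB: "partition_on (X // R) (blk X R ` ?K)"
  proof (rule partition_onI)
    show "\<Union>(blk X R ` ?K) = X // R"
    proof
      show "\<Union>(blk X R ` ?K) \<subseteq> X // R" using bsub by blast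
      show "X // R \<subseteq> \<Union>(blk X R ` ?K)"
      proof
        fix Y assume Y: "Y \<in> X // R"
        then obtain y where y: "y \<in> Y" using in_quotient_imp_non_empty[OF e] by blast
        then have "y \<in> X" using in_quotient_imp_subset[OF e Y] by auto
        then obtain C where C: "C \<in> ?K" "y \<in> C" using part_cover[OF pK] by blast
        then have "Y \<subseteq> C" using dich[OF Y C(1)] y by auto
        then show "Y \<in> \<Union>(blk X R ` ?K)" using C Y by (auto simp: blk_def)
      qed
    qed
    fix p q assume pq: "p \<in> blk X R ` ?K" "q \<in> blk X R ` ?K" "p \<noteq> q"
    then obtain C1 C2 where C: "C1 \<in> ?K" "C2 \<in> ?K" "p = blk X R C1" "q = blk X R C2" by blast
    then have "C1 \<noteq> C2" using pq by auto
    then have "C1 \<inter> C2 = {}" using part_dj[OF pK C(1,2)] by simp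
    have "Y \<notin> q" if "Y \<in> p" for Y
    proof
      assume "Y \<in> q"
      then have "Y \<subseteq> C1 \<inter> C2" "Y \<in> X // R" using that C by (auto simp: blk_def)
      then show False using \<open>C1 \<inter> C2 = {}\<close> in_quotient_imp_non_empty[OF e] by blast
    qed
    then show "disjnt p q" by (auto simp: disjnt_def)
  next
    show "{} \<notin> blk X R ` ?K" using bu part_ne[OF pK] by force
  qed
  have sB: "\<forall>Z\<in>blk X R ` ?K. sep (X // R) ?g Z"
  proof
    fix Z assume "Z \<in> blk X R ` ?K"
    then obtain C where C: "C \<in> ?K" "Z = blk X R C" by blast
    have "sep (\<Union>(X // R)) f (\<Union>Z)" using C bu gK Union_quotient[OF e] by (simp add: good_def)
    then show "sep (X // R) ?g Z" using quot_sep[OF e subset_refl] C(2) bsub by blast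
  qed
  have "ic (X // R) ?g = (\<Sum>Z\<in>blk X R ` ?K. ic Z ?g)"
    using ic_sum[OF fq, of ?g, OF g0 pB sB] .
  also have "\<dots> = (\<Sum>C\<in>?K. ic (blk X R C) ?g)" using sum.reindex[OF inj] by simp
  finally show s: "ic (X // R) ?g = (\<Sum>C\<in>?K. ic (blk X R C) ?g)" .
  have fb: "finite (blk X R C)" for C using fq bsub finite_subset by blast
  have neb: "blk X R C \<noteq> {}" if "C \<in> ?K" for C using bu[OF that] part_ne[OF pK that] by auto
  have ge: "\<forall>C\<in>?K. 1 \<le> ic (blk X R C) ?g"
  proof
    fix C assume "C \<in> ?K"
    show "1 \<le> ic (blk X R C) ?g" using ic_indec(1)[of "blk X R C" ?g, OF fb g0 neb[OF \<open>C \<in> ?K\<close>]] .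
  qed
  have cK: "card ?K = ic X f" by (simp add: ic_def)
  show "ic X f \<le> ic (X // R) ?g" using sum_ge1(1)[OF fK ge] s cK by simp
  have "ic (X // R) ?g = ic X f \<longleftrightarrow> (\<forall>C\<in>?K. ic (blk X R C) ?g = 1)"
    using sum_ge1(2)[OF fK ge] s cK by simp
  also have "\<dots> \<longleftrightarrow> (\<forall>C\<in>?K. indec (blk X R C) ?g)"
  proof -
    have "ic (blk X R C) ?g = 1 \<longleftrightarrow> indec (blk X R C) ?g" if "C \<in> ?K" for C
      using ic_indec(2)[of "blk X R C" ?g, OF fb g0 neb[OF that]] .
    then show ?thesis by blast
  qed
  finally show "ic (X // R) ?g = ic X f \<longleftrightarrow> (\<forall>C\<in>?K. indec (blk X R C) ?g)" .
qed

lemma transport: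
  assumes inj: "inj_on \<phi> X" and gf: "\<And>A. A \<subseteq> X \<Longrightarrow> g (\<phi> ` A) = f A"
    and fin: "finite X" and f0: "f {} = 0"
  shows "ic (\<phi> ` X) g = ic X f"
proof -
  have g0: "g {} = 0" using gf[of "{}"] f0 by simp
  have sepT: "sep Y f S \<longleftrightarrow> sep (\<phi> ` Y) g (\<phi> ` S)" if "S \<subseteq> Y" "Y \<subseteq> X" for S Y
  proof -
    have "(\<forall>A'. A' \<subseteq> \<phi> ` Y \<longrightarrow> g A' = g (A' \<inter> \<phi> ` S) + g (A' - \<phi> ` S)) \<longleftrightarrow>
          (\<forall>A. A \<subseteq> Y \<longrightarrow> g (\<phi> ` A) = g (\<phi> ` A \<inter> \<phi> ` S) + g (\<phi> ` A - \<phi> ` S))"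
      by (auto simp: subset_image_iff)
    also have "\<dots> \<longleftrightarrow> (\<forall>A. A \<subseteq> Y \<longrightarrow> f A = f (A \<inter> S) + f (A - S))"
    proof -
      have "g (\<phi> ` A) = f A \<and> g (\<phi> ` A \<inter> \<phi> ` S) = f (A \<inter> S) \<and> g (\<phi> ` A - \<phi> ` S) = f (A - S)"
        if "A \<subseteq> Y" for A
      proof -
        have "\<phi> ` A \<inter> \<phi> ` S = \<phi> ` (A \<inter> S)" using inj_on_image_Int[OF inj] that \<open>S \<subseteq> Y\<close> \<open>Y \<subseteq> X\<close> by auto
        moreover have "\<phi> ` A - \<phi> ` S = \<phi> ` (A - S)"
        proof -
          have "A - S \<subseteq> X" "S \<subseteq> X" using that \<open>S \<subseteq> Y\<close> \<open>Y \<subseteq> X\<close> by auto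
          from inj_on_image_set_diff[OF inj this] show ?thesis by simp
        qed
        moreover have "A \<inter> S \<subseteq> X" "A - S \<subseteq> X" "A \<subseteq> X" using that \<open>Y \<subseteq> X\<close> by auto
        ultimately show ?thesis using gf by metis
      qed
      then show ?thesis by auto
    qed
    finally show ?thesis unfolding sep_def using that by auto
  qed
  have indT: "indec Y f \<longleftrightarrow> indec (\<phi> ` Y) g" if "Y \<subseteq> X" for Y
  proof
    assume h: "indec Y f"
    show "indec (\<phi> ` Y) g" unfolding indec_def
    proof (intro conjI allI impI)
      show "\<phi> ` Y \<noteq> {}" using h by (simp add: indec_def)
      fix T' assume T': "sep (\<phi> ` Y) g T'"
      then obtain T where T: "T \<subseteq> Y" "T' = \<phi> ` T" by (auto simp: sep_def subset_image_iff)
      then have "sep Y f T" using sepT[OF T(1) that] T' by simp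
      then show "T' = {} \<or> T' = \<phi> ` Y" using h T by (auto simp: indec_def)
    qed
  next
    assume h: "indec (\<phi> ` Y) g"
    show "indec Y f" unfolding indec_def
    proof (intro conjI allI impI)
      show "Y \<noteq> {}" using h by (auto simp: indec_def)
      fix T assume T: "sep Y f T"
      then have TY: "T \<subseteq> Y" by (simp add: sep_def)
      then have "sep (\<phi> ` Y) g (\<phi> ` T)" using sepT[OF TY that] T by simp
      then have "\<phi> ` T = {} \<or> \<phi> ` T = \<phi> ` Y" using h unfolding indec_def by blast
      moreover have "inj_on \<phi> Y" using inj that inj_on_subset by blast
      ultimately show "T = {} \<or> T = Y" using TY by (metis image_is_empty inj_on_image_eq_iff subset_refl)
    qed
  qed
  obtain P where P: "good X f P" using ic_rel_char(2)[OF fin, of f, OF f0] by blast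
  have pP: "partition_on X P" using P by (simp add: good_def)
  have PX: "P \<subseteq> Pow X" using pP by (auto simp: partition_on_def)
  have "good (\<phi> ` X) g ((`) \<phi> ` P)"
    unfolding good_def
  proof (intro conjI ballI)
    have "partition_on (\<phi> ` X) ((`) \<phi> ` P - {{}})" using partition_on_inj_image[OF pP inj] .
    moreover have "(`) \<phi> ` P - {{}} = (`) \<phi> ` P" using pP by (auto simp: partition_on_def)
    ultimately show "partition_on (\<phi> ` X) ((`) \<phi> ` P)" by simp
    fix Z assume "Z \<in> (`) \<phi> ` P"
    then obtain Y where Y: "Y \<in> P" "Z = \<phi> ` Y" by blast
    have YX: "Y \<subseteq> X" using Y PX by auto
    show "sep (\<phi> ` X) g Z" using sepT[OF YX subset_refl] P Y by (simp add: good_def)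
    show "indec Z g" using indT[OF YX] P Y by (simp add: good_def)
  qed
  moreover have "finite (\<phi> ` X)" using fin by simp
  ultimately have "ic (\<phi> ` X) g = card ((`) \<phi> ` P)" using good_ic[of "\<phi> ` X" g] g0 by blast
  also have "\<dots> = card P" using card_image[OF inj_on_subset[OF inj_on_image_Pow[OF inj] PX]] .
  also have "\<dots> = ic X f" using good_ic[OF fin, of f, OF f0 P] by simp
  finally show ?thesis .
qed

lemma ic_singletons:
  assumes fin: "finite X" and f0: "f {} = 0" and s: "\<forall>x\<in>X. sep X f {x}"
  shows "ic X f = card X"
proof -
  have "good X f ((\<lambda>x. {x}) ` X)"
    using s partition_on_singletons indec_singleton by (auto simp: good_def)
  then have "ic X f = card ((\<lambda>x. {x}) ` X)" using good_ic[OF fin, of f, OF f0] by blast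
  also have "\<dots> = card X" by (rule card_image) (auto simp: inj_on_def)
  finally show ?thesis .
qed

lemma modular_iff:
  assumes fin: "finite X" and f0: "f {} = 0"
  shows "modular X f \<longleftrightarrow> (\<forall>x\<in>X. sep X f {x})"
proof
  assume m: "modular X f"
  show "\<forall>x\<in>X. sep X f {x}"
  proof (intro ballI)
    fix x assume "x \<in> X"
    show "sep X f {x}" unfolding sep_def
    proof (intro conjI allI impI)
      show "{x} \<subseteq> X" using \<open>x \<in> X\<close> by simp
      fix A assume A: "A \<subseteq> X"
      have fA: "finite A" using A fin finite_subset by blast
      have m1: "f B = (\<Sum>a\<in>B. f {a})" if "B \<subseteq> X" for B using m that by (simp add: modular_def)
      have s1: "A \<inter> {x} \<subseteq> X" "A - {x} \<subseteq> X" using A by auto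
      have q1: "f (A \<inter> {x}) = (\<Sum>a\<in>A \<inter> {x}. f {a})" using m1[OF s1(1)] .
      have q2: "f (A - {x}) = (\<Sum>a\<in>A - {x}. f {a})" using m1[OF s1(2)] .
      have "f A = (\<Sum>a\<in>A. f {a})" using m1[OF A] .
      also have "\<dots> = (\<Sum>a\<in>A \<inter> {x}. f {a}) + (\<Sum>a\<in>A - {x}. f {a})" using sum.Int_Diff[OF fA] .
      also have "\<dots> = f (A \<inter> {x}) + f (A - {x})" using q1 q2 by simp
      finally show "f A = f (A \<inter> {x}) + f (A - {x})" .
    qed
  qed
next
  assume s: "\<forall>x\<in>X. sep X f {x}"
  show "modular X f" unfolding modular_def
  proof (intro allI impI)
    fix A assume A: "A \<subseteq> X"
    have p: "partition_on X ((\<lambda>x. {x}) ` X)" by (rule partition_on_singletons)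
    have "f A = (\<Sum>Y\<in>(\<lambda>x. {x}) ` X. f (A \<inter> Y))"
      using sep_sum_part[of X _ f, OF fin p _ f0 A] s by blast
    also have "\<dots> = (\<Sum>x\<in>X. f (A \<inter> {x}))" by (subst sum.reindex) (auto simp: inj_on_def)
    also have "\<dots> = (\<Sum>x\<in>A. f (A \<inter> {x}))"
      using A fin f0 by (intro sum.mono_neutral_right) auto
    also have "\<dots> = (\<Sum>x\<in>A. f {x})" by (intro sum.cong) auto
    finally show "f A = (\<Sum>x\<in>A. f {x})" .
  qed
qed

lemma quotient_image: "X // R = (\<lambda>x. R `` {x}) ` X"
  by (auto simp: quotient_def)

lemma card_quot_Id:
  assumes fin: "finite X" and e: "equiv X R" and c: "card (X // R) = card X"
  shows "R = Id_on X"
proof -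
  have "inj_on (\<lambda>x. R `` {x}) X" using eq_card_imp_inj_on[OF fin] c quotient_image[of X R] by simp
  then have "x = y" if "(x, y) \<in> R" for x y
    using that equiv_class_eq[OF e that] e equiv_type[OF e] by (auto simp: inj_on_def)
  moreover have "Id_on X \<subseteq> R" using e by (auto simp: equiv_def refl_on_def)
  moreover have "R \<subseteq> X \<times> X" using equiv_type[OF e] .
  ultimately show ?thesis by auto
qed

lemma refine_eq:
  assumes fin: "finite X" and P: "partition_on X P" and Q: "partition_on X Q"
    and r: "\<forall>Y\<in>P. \<exists>Z\<in>Q. Y \<subseteq> Z" and c: "card P \<le> card Q"
  shows "P = Q"
proof -
  define \<beta> where "\<beta> Y = (SOME Z. Z \<in> Q \<and> Y \<subseteq> Z)" for Y
  have b: "\<beta> Y \<in> Q \<and> Y \<subseteq> \<beta> Y" if "Y \<in> P" for Y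
    unfolding \<beta>_def using r that by (metis (mono_tags, lifting) someI_ex)
  have fP: "finite P" using finite_elements[OF fin P] .
  have key: "\<beta> Y = Z" if "Y \<in> P" "Z \<in> Q" "z \<in> Z" "z \<in> Y" for Y Z z
  proof (rule ccontr)
    assume "\<beta> Y \<noteq> Z"
    then have "\<beta> Y \<inter> Z = {}" using part_dj[OF Q] b[OF that(1)] that(2) by blast
    then show False using b[OF that(1)] that by blast
  qed
  have surj: "\<beta> ` P = Q"
  proof
    show "\<beta> ` P \<subseteq> Q" using b by blast
    show "Q \<subseteq> \<beta> ` P"
    proof
      fix Z assume Z: "Z \<in> Q"
      then obtain z where z: "z \<in> Z" using part_ne[OF Q] by blast
      then have "z \<in> X" using part_sub[OF Q Z] by blast
      then obtain Y where "Y \<in> P" "z \<in> Y" using part_cover[OF P] by blast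
      then show "Z \<in> \<beta> ` P" using key[OF _ Z z] by blast
    qed
  qed
  have "card (\<beta> ` P) = card P" using surj c card_image_le[OF fP, of \<beta>] by simp
  then have inj: "inj_on \<beta> P" using eq_card_imp_inj_on[OF fP] by blast
  have QP: "Q \<subseteq> P"
  proof
    fix Z assume Z: "Z \<in> Q"
    then obtain Y where Y: "Y \<in> P" "\<beta> Y = Z" using surj by blast
    have "Z \<subseteq> Y"
    proof
      fix z assume z: "z \<in> Z"
      then have "z \<in> X" using part_sub[OF Q Z] by blast
      then obtain Y' where Y': "Y' \<in> P" "z \<in> Y'" using part_cover[OF P] by blast
      then have "\<beta> Y' = Z" using key[OF _ Z z] by blast
      then have "Y' = Y" using inj Y Y' by (auto simp: inj_on_def)
      then show "z \<in> Y" using Y' by simp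
    qed
    then show "Z \<in> P" using b[OF Y(1)] Y by auto
  qed
  have "P \<subseteq> Q"
  proof
    fix Y assume Y: "Y \<in> P"
    have "\<beta> Y \<in> P" using QP b[OF Y] by blast
    then have "\<beta> Y = Y" using part_dj[OF P Y] b[OF Y] part_ne[OF P Y] by blast
    then show "Y \<in> Q" using b[OF Y] by simp
  qed
  with QP show ?thesis by blast
qed


lemma bool_fun_0: "bool_fun X f \<Longrightarrow> f {} = 0"
  by (simp add: bool_fun_def)

lemma fin_quot: "finite X \<Longrightarrow> equiv X R \<Longrightarrow> finite (X // R)"
  using finite_quotient equiv_type by blast

lemma ES_iff:
  assumes fin: "finite X" and f0: "f {} = 0"
  shows "R \<in> ES X f \<longleftrightarrow> equiv X R \<and> (\<forall>Y\<in>X // R. indec Y f) \<and> ic (X // R) (quotf X R f) = ic X f"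
proof (cases "equiv X R")
  case True
  then show ?thesis using EW_iff[OF fin, of f, OF f0 True] by (auto simp: ES_def)
qed (simp add: ES_def EW_def)

lemma equiv_Id_on': "equiv X (Id_on X)"
  by (auto simp: equiv_def refl_on_def sym_def trans_def)

lemma quot_Id_on: "X // Id_on X = (\<lambda>x. {x}) ` X"
  unfolding quotient_image by (auto intro!: image_cong)

lemma Id_in_ES:
  assumes fin: "finite X" and f0: "f {} = 0"
  shows "Id_on X \<in> ES X f"
proof -
  have q: "X // Id_on X = (\<lambda>x. {x}) ` X" by (rule quot_Id_on)
  have ind: "\<forall>Y\<in>X // Id_on X. indec Y f" using q indec_singleton by auto
  have inj: "inj_on (\<lambda>x. {x}) X" by (auto simp: inj_on_def)
  have gf: "quotf X (Id_on X) f ((\<lambda>x. {x}) ` A) = f A" if "A \<subseteq> X" for A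
  proof -
    have "(\<lambda>x. {x}) ` A \<subseteq> X // Id_on X" using q that by auto
    then have "quotf X (Id_on X) f ((\<lambda>x. {x}) ` A) = f (\<Union>((\<lambda>x. {x}) ` A))"
      using quotf_eq[OF equiv_Id_on'] by blast
    then show ?thesis by simp
  qed
  have "ic ((\<lambda>x. {x}) ` X) (quotf X (Id_on X) f) = ic X f" using transport[of "\<lambda>x. {x}" X "quotf X (Id_on X) f" f, OF inj gf fin f0] by blast
  then show ?thesis using ES_iff[OF fin, of f, OF f0] equiv_Id_on' ind q by simp
qed

lemma comps_quot_sep:
  assumes fin: "finite X" and f0: "f {} = 0" and C: "C \<in> X // ic_rel X f"
  shows "sep (X // ic_rel X f) (quotf X (ic_rel X f) f) {C}"
proof -
  have e: "equiv X (ic_rel X f)" and g: "good X f (X // ic_rel X f)" using ic_rel_char[OF fin, of f, OF f0] by auto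
  have "sep (\<Union>(X // ic_rel X f)) f (\<Union>{C})" using g C Union_quotient[OF e] by (simp add: good_def)
  then show ?thesis using quot_sep[OF e subset_refl, of "{C}" f] C by simp
qed

lemma ic_rel_in_ES:
  assumes fin: "finite X" and f0: "f {} = 0"
  shows "ic_rel X f \<in> ES X f" "modular (X // ic_rel X f) (quotf X (ic_rel X f) f)"
proof -
  let ?K = "X // ic_rel X f"
  have e: "equiv X (ic_rel X f)" and g: "good X f ?K" using ic_rel_char[OF fin, of f, OF f0] by auto
  have fK: "finite ?K" using fin_quot[OF fin e] .
  have s: "\<forall>C\<in>?K. sep ?K (quotf X (ic_rel X f) f) {C}" using comps_quot_sep[OF fin, of f, OF f0] by blast
  have "ic ?K (quotf X (ic_rel X f) f) = card ?K"
    using ic_singletons[of ?K "quotf X (ic_rel X f) f", OF fK quotf_0[of f, OF f0] s] .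
  then show "ic_rel X f \<in> ES X f" using ES_iff[OF fin, of f, OF f0] e g by (simp add: good_def ic_def)
  show "modular ?K (quotf X (ic_rel X f) f)" using modular_iff[of ?K "quotf X (ic_rel X f) f", OF fK quotf_0[of f, OF f0]] s by blast
qed

lemma part3:
  assumes fin: "finite X" and bf: "bool_fun X f"
  shows "Id_on X \<in> ES X f \<and> ic_rel X f \<in> ES X f \<and>
      (\<forall>R\<in>ES X f. (modular X (condf X R f) \<longleftrightarrow> R = Id_on X) \<and>
                    (modular (X // R) (quotf X R f) \<longleftrightarrow> R = ic_rel X f))"
proof (intro conjI ballI)
  have f0: "f {} = 0" using bf by (rule bool_fun_0)
  show "Id_on X \<in> ES X f" using Id_in_ES[of X f, OF fin f0] .
  show "ic_rel X f \<in> ES X f" using ic_rel_in_ES(1)[of X f, OF fin f0] .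
  fix R assume R: "R \<in> ES X f"
  have e: "equiv X R" and ind: "\<forall>Y\<in>X // R. indec Y f" and icq: "ic (X // R) (quotf X R f) = ic X f"
    using R ES_iff[OF fin, of f, OF f0] by auto
  have ew: "ic X (condf X R f) = card (X // R)" using R by (simp add: ES_def EW_def cl_def)
  have g0: "condf X R f {} = 0" using condf_0[of f, OF f0] .
  show "modular X (condf X R f) \<longleftrightarrow> R = Id_on X"
  proof
    assume m: "modular X (condf X R f)"
    then have "\<forall>x\<in>X. sep X (condf X R f) {x}" using modular_iff[of X "condf X R f", OF fin g0] by blast
    then have "ic X (condf X R f) = card X" using ic_singletons[of X "condf X R f", OF fin g0] by blast
    then show "R = Id_on X" using card_quot_Id[OF fin e] ew by simp
  next
    assume "R = Id_on X"
    then have "\<forall>x\<in>X. sep X (condf X R f) {x}"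
      using condf_sep[OF fin, of f, OF f0 e] quot_Id_on[of X] by auto
    then show "modular X (condf X R f)" using modular_iff[of X "condf X R f", OF fin g0] by blast
  qed
  show "modular (X // R) (quotf X R f) \<longleftrightarrow> R = ic_rel X f"
  proof
    assume m: "modular (X // R) (quotf X R f)"
    let ?K = "X // ic_rel X f"
    have eK: "equiv X (ic_rel X f)" and gK: "good X f ?K" using ic_rel_char[OF fin, of f, OF f0] by auto
    have fq: "finite (X // R)" using fin_quot[OF fin e] .
    have "\<forall>x\<in>X // R. sep (X // R) (quotf X R f) {x}"
      using modular_iff[of "X // R" "quotf X R f", OF fq quotf_0[of f, OF f0]] m by blast
    then have "ic (X // R) (quotf X R f) = card (X // R)"
      using ic_singletons[of "X // R" "quotf X R f", OF fq quotf_0[of f, OF f0]] by blast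
    then have c: "card (X // R) = card ?K" using icq by (simp add: ic_def)
    have pK: "partition_on X ?K" using gK by (simp add: good_def)
    have r: "\<forall>Y\<in>X // R. \<exists>Z\<in>?K. Y \<subseteq> Z"
    proof
      fix Y assume Y: "Y \<in> X // R"
      obtain y where y: "y \<in> Y" using in_quotient_imp_non_empty[OF e Y] by blast
      then have "y \<in> X" using in_quotient_imp_subset[OF e Y] by blast
      then obtain C where C: "C \<in> ?K" "y \<in> C" using part_cover[OF pK] by blast
      have "Y \<subseteq> C \<or> Y \<inter> C = {}"
        using indec_sep_dich[of X f C Y] gK C ind Y in_quotient_imp_subset[OF e Y] by (auto simp: good_def)
      then show "\<exists>Z\<in>?K. Y \<subseteq> Z" using C y by blast
    qed
    have "X // R = ?K" using refine_eq[OF fin partition_on_quotient[OF e] pK r] c by simp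
    then show "R = ic_rel X f" using prel_equiv[OF e] prel_equiv[OF eK] by simp
  next
    assume "R = ic_rel X f"
    then show "modular (X // R) (quotf X R f)" using ic_rel_in_ES(2)[of X f, OF fin f0] by simp
  qed
qed


lemma restrict_equiv:
  assumes e: "equiv U R" and S: "S \<subseteq> U" and cl: "\<And>Z. Z \<in> U // R \<Longrightarrow> Z \<subseteq> S \<or> Z \<inter> S = {}"
  shows "equiv S (R \<inter> S \<times> S)" "S // (R \<inter> S \<times> S) = {Z \<in> U // R. Z \<subseteq> S}"
proof -
  let ?PS = "{Z \<in> U // R. Z \<subseteq> S}"
  have u: "\<Union>?PS = S" using blk_union[OF e S cl] by (simp add: blk_def)
  have pU: "partition_on U (U // R)" using partition_on_quotient[OF e] .
  have p: "partition_on S ?PS"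
  proof (rule partition_onI)
    show "\<Union>?PS = S" by (rule u)
    show "{} \<notin> ?PS" using in_quotient_imp_non_empty[OF e] by blast
    fix p q assume "p \<in> ?PS" "q \<in> ?PS" "p \<noteq> q"
    then show "disjnt p q" using part_dj[OF pU] by (auto simp: disjnt_def)
  qed
  have pr: "prel ?PS = R \<inter> S \<times> S"
  proof
    show "prel ?PS \<subseteq> R \<inter> S \<times> S"
    proof
      fix z assume "z \<in> prel ?PS"
      then obtain x y Z where z: "z = (x, y)" "Z \<in> U // R" "Z \<subseteq> S" "x \<in> Z" "y \<in> Z"
        by (auto simp: prel_def)
      then have "(x, y) \<in> R" using in_quotient_imp_in_rel[OF e] by blast
      then show "z \<in> R \<inter> S \<times> S" using z by auto
    qed
    show "R \<inter> S \<times> S \<subseteq> prel ?PS"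
    proof
      fix z assume "z \<in> R \<inter> S \<times> S"
      then obtain x y where z: "z = (x, y)" "(x, y) \<in> R" "x \<in> S" "y \<in> S" by blast
      have Z: "R `` {x} \<in> U // R" "x \<in> R `` {x}" "y \<in> R `` {x}"
      proof -
        have "x \<in> U" using z S by auto
        then show "R `` {x} \<in> U // R" "x \<in> R `` {x}" "y \<in> R `` {x}"
          using z quotientI[of x U R] equiv_class_self[OF e] by auto
      qed
      then have "R `` {x} \<subseteq> S" using cl[OF Z(1)] z by blast
      then show "z \<in> prel ?PS" using Z z by (auto simp: prel_def)
    qed
  qed
  show "equiv S (R \<inter> S \<times> S)" using prel_partition(1)[OF p] pr by simp
  show "S // (R \<inter> S \<times> S) = ?PS" using prel_partition(2)[OF p] pr by simp
qed

lemma prel_Un: "prel (A \<union> B) = prel A \<union> prel B"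
  by (auto simp: prel_def)

lemma union_equiv:
  assumes d: "X \<inter> Y = {}" and eX: "equiv X RX" and eY: "equiv Y RY"
  shows "equiv (X \<union> Y) (RX \<union> RY)" "(X \<union> Y) // (RX \<union> RY) = X // RX \<union> Y // RY"
proof -
  have pX: "partition_on X (X // RX)" and pY: "partition_on Y (Y // RY)"
    using partition_on_quotient eX eY by auto
  have p: "partition_on (X \<union> Y) (X // RX \<union> Y // RY)"
  proof (rule partition_onI)
    show "\<Union>(X // RX \<union> Y // RY) = X \<union> Y" using Union_quotient[OF eX] Union_quotient[OF eY] by auto
    show "{} \<notin> X // RX \<union> Y // RY" using in_quotient_imp_non_empty eX eY by blast
    fix p q assume pq: "p \<in> X // RX \<union> Y // RY" "q \<in> X // RX \<union> Y // RY" "p \<noteq> q"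
    have sx: "\<And>Z. Z \<in> X // RX \<Longrightarrow> Z \<subseteq> X" using in_quotient_imp_subset[OF eX] .
    have sy: "\<And>Z. Z \<in> Y // RY \<Longrightarrow> Z \<subseteq> Y" using in_quotient_imp_subset[OF eY] .
    show "disjnt p q"
      using pq part_dj[OF pX] part_dj[OF pY] sx sy d unfolding disjnt_def by blast
  qed
  have r: "RX \<union> RY = prel (X // RX \<union> Y // RY)"
    using prel_equiv[OF eX] prel_equiv[OF eY] prel_Un by metis
  show "equiv (X \<union> Y) (RX \<union> RY)" using prel_partition(1)[OF p] r by simp
  show "(X \<union> Y) // (RX \<union> RY) = X // RX \<union> Y // RY" using prel_partition(2)[OF p] r by simp
qed

context
  fixes X Y :: "'a set" and f g :: "'a set \<Rightarrow> int"
  assumes d: "X \<inter> Y = {}" and f0: "f {} = 0" and g0: "g {} = 0"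
begin

lemma h_X: "A \<subseteq> X \<Longrightarrow> star1 X Y f g A = f A"
proof -
  assume A: "A \<subseteq> X"
  then have "A \<inter> X = A" "A \<inter> Y = {}" "A \<subseteq> X \<union> Y" using d by auto
  then show ?thesis using A g0 by (simp add: star1_def)
qed

lemma h_Y: "A \<subseteq> Y \<Longrightarrow> star1 X Y f g A = g A"
proof -
  assume A: "A \<subseteq> Y"
  then have "A \<inter> Y = A" "A \<inter> X = {}" "A \<subseteq> X \<union> Y" using d by auto
  then show ?thesis using A f0 by (simp add: star1_def)
qed

lemma h_0: "star1 X Y f g {} = 0"
  using f0 g0 by (simp add: star1_def)

lemma h_sepX: "sep (X \<union> Y) (star1 X Y f g) X"
  unfolding sep_def
proof (intro conjI allI impI)
  fix A assume A: "A \<subseteq> X \<union> Y"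
  have "A - X = A \<inter> Y" using A d by auto
  then have "star1 X Y f g (A - X) = g (A \<inter> Y)" using h_Y[of "A - X"] by auto
  moreover have "star1 X Y f g (A \<inter> X) = f (A \<inter> X)" using h_X by simp
  ultimately show "star1 X Y f g A = star1 X Y f g (A \<inter> X) + star1 X Y f g (A - X)"
    using A by (simp add: star1_def)
qed simp

lemma h_ic:
  assumes fX: "finite X" and fY: "finite Y"
  shows "ic (X \<union> Y) (star1 X Y f g) = ic X f + ic Y g"
proof -
  have "ic (X \<union> Y) (star1 X Y f g) = ic X (star1 X Y f g) + ic (X \<union> Y - X) (star1 X Y f g)"
    using ic_split[of "X \<union> Y" "star1 X Y f g" X] fX fY h_0 h_sepX by simp
  also have "X \<union> Y - X = Y" using d by auto
  also have "ic X (star1 X Y f g) = ic X f" using h_X by (intro ic_cong) auto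
  also have "ic Y (star1 X Y f g) = ic Y g" using h_Y by (intro ic_cong) auto
  finally show ?thesis .
qed

lemma star_quot:
  assumes fX: "finite X" and fY: "finite Y" and eX: "equiv X RX" and eY: "equiv Y RY"
  shows "ic ((X \<union> Y) // (RX \<union> RY)) (quotf (X \<union> Y) (RX \<union> RY) (star1 X Y f g)) =
     ic (X // RX) (quotf X RX f) + ic (Y // RY) (quotf Y RY g)"
proof -
  let ?h = "star1 X Y f g"
  let ?R = "RX \<union> RY"
  let ?U = "(X \<union> Y) // ?R"
  let ?q = "quotf (X \<union> Y) ?R ?h"
  have e: "equiv (X \<union> Y) ?R" and q: "?U = X // RX \<union> Y // RY" using union_equiv[OF d eX eY] by auto
  have fU: "finite ?U" using fin_quot[OF _ e] fX fY by simp
  have q0: "?q {} = 0" using h_0 by (rule quotf_0)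
  have s: "sep ?U ?q (X // RX)"
  proof (rule quot_sep[OF e])
    show "?U \<subseteq> (X \<union> Y) // ?R" by simp
    show "X // RX \<subseteq> ?U" using q by simp
    show "sep (\<Union>?U) ?h (\<Union>(X // RX))" using Union_quotient[OF e] Union_quotient[OF eX] h_sepX by simp
  qed
  have dj: "X // RX \<inter> Y // RY = {}"
    using in_quotient_imp_subset[OF eX] in_quotient_imp_subset[OF eY] in_quotient_imp_non_empty[OF eX] d
    by blast
  have "ic ?U ?q = ic (X // RX) ?q + ic (?U - X // RX) ?q" using ic_split[OF fU q0 s] .
  also have "?U - X // RX = Y // RY" using q dj by auto
  also have "ic (X // RX) ?q = ic (X // RX) (quotf X RX f)"
  proof (rule ic_cong)
    fix B assume B: "B \<subseteq> X // RX"
    have u: "\<Union>B \<subseteq> X" using B in_quotient_imp_subset[OF eX] by blast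
    have B': "B \<subseteq> (X \<union> Y) // ?R" using B q by auto
    have "?q B = ?h (\<Union>B)" using quotf_eq[OF e B'] .
    also have "\<dots> = f (\<Union>B)" using h_X[OF u] .
    also have "\<dots> = quotf X RX f B" using quotf_eq[OF eX B] by simp
    finally show "?q B = quotf X RX f B" .
  qed
  also have "ic (Y // RY) ?q = ic (Y // RY) (quotf Y RY g)"
  proof (rule ic_cong)
    fix B assume B: "B \<subseteq> Y // RY"
    have u: "\<Union>B \<subseteq> Y" using B in_quotient_imp_subset[OF eY] by blast
    have B': "B \<subseteq> (X \<union> Y) // ?R" using B q by auto
    have "?q B = ?h (\<Union>B)" using quotf_eq[OF e B'] .
    also have "\<dots> = g (\<Union>B)" using h_Y[OF u] .
    also have "\<dots> = quotf Y RY g B" using quotf_eq[OF eY B] by simp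
    finally show "?q B = quotf Y RY g B" .
  qed
  finally show ?thesis .
qed

end

lemma part1:
  assumes fX: "finite X" and fY: "finite Y" and d: "X \<inter> Y = {}" and bf: "bool_fun X f" and bg: "bool_fun Y g"
  shows "ES (X \<union> Y) (star1 X Y f g) = {RX \<union> RY | RX RY. RX \<in> ES X f \<and> RY \<in> ES Y g}"
proof -
  have f0: "f {} = 0" and g0: "g {} = 0" using bf bg by (auto simp: bool_fun_def)
  let ?h = "star1 X Y f g"
  have fU: "finite (X \<union> Y)" using fX fY by simp
  have h0: "?h {} = 0" using h_0[of X Y f g, OF d f0 g0] .
  have ih: "ic (X \<union> Y) ?h = ic X f + ic Y g" using h_ic[of X Y f g, OF d f0 g0 fX fY] .
  note ESh = ES_iff[of "X \<union> Y" ?h, OF fU h0]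
  note ESf = ES_iff[of X f, OF fX f0]
  note ESg = ES_iff[of Y g, OF fY g0]
  show ?thesis
  proof
    show "{RX \<union> RY | RX RY. RX \<in> ES X f \<and> RY \<in> ES Y g} \<subseteq> ES (X \<union> Y) ?h"
    proof
      fix R assume "R \<in> {RX \<union> RY | RX RY. RX \<in> ES X f \<and> RY \<in> ES Y g}"
      then obtain RX RY where R: "R = RX \<union> RY" "RX \<in> ES X f" "RY \<in> ES Y g" by blast
      have eX: "equiv X RX" "\<forall>Z\<in>X // RX. indec Z f" "ic (X // RX) (quotf X RX f) = ic X f"
        using R ESf by auto
      have eY: "equiv Y RY" "\<forall>Z\<in>Y // RY. indec Z g" "ic (Y // RY) (quotf Y RY g) = ic Y g"
        using R ESg by auto
      have e: "equiv (X \<union> Y) R" and q: "(X \<union> Y) // R = X // RX \<union> Y // RY"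
        using union_equiv[OF d eX(1) eY(1)] R by auto
      have ind: "\<forall>Z\<in>(X \<union> Y) // R. indec Z ?h"
      proof
        fix Z assume "Z \<in> (X \<union> Y) // R"
        then have "Z \<in> X // RX \<or> Z \<in> Y // RY" using q by simp
        then show "indec Z ?h"
        proof
          assume Z: "Z \<in> X // RX"
          then have "Z \<subseteq> X" using in_quotient_imp_subset[OF eX(1)] by blast
          then have "indec Z ?h \<longleftrightarrow> indec Z f" using h_X[of X Y f g, OF d f0 g0] by (intro indec_cong) auto
          then show ?thesis using eX(2) Z by simp
        next
          assume Z: "Z \<in> Y // RY"
          then have "Z \<subseteq> Y" using in_quotient_imp_subset[OF eY(1)] by blast
          then have "indec Z ?h \<longleftrightarrow> indec Z g" using h_Y[of X Y f g, OF d f0 g0] by (intro indec_cong) auto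
          then show ?thesis using eY(2) Z by simp
        qed
      qed
      have "ic ((X \<union> Y) // R) (quotf (X \<union> Y) R ?h) = ic (X \<union> Y) ?h"
        using star_quot[of X Y f g, OF d f0 g0 fX fY eX(1) eY(1)] R eX(3) eY(3) ih by simp
      then show "R \<in> ES (X \<union> Y) ?h" using ESh e ind by simp
    qed
  next
    show "ES (X \<union> Y) ?h \<subseteq> {RX \<union> RY | RX RY. RX \<in> ES X f \<and> RY \<in> ES Y g}"
    proof
      fix R assume R: "R \<in> ES (X \<union> Y) ?h"
      have e: "equiv (X \<union> Y) R" and ind: "\<forall>Z\<in>(X \<union> Y) // R. indec Z ?h"
        and icq: "ic ((X \<union> Y) // R) (quotf (X \<union> Y) R ?h) = ic (X \<union> Y) ?h"
        using R ESh by auto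
      have dichX: "Z \<subseteq> X \<or> Z \<inter> X = {}" if "Z \<in> (X \<union> Y) // R" for Z
        using indec_sep_dich[OF h_sepX[of X Y f g, OF d f0 g0] in_quotient_imp_subset[OF e that]] ind that by blast
      have dichY: "Z \<subseteq> Y \<or> Z \<inter> Y = {}" if "Z \<in> (X \<union> Y) // R" for Z
        using dichX[OF that] in_quotient_imp_subset[OF e that] d by blast
      define RX where "RX = R \<inter> X \<times> X"
      define RY where "RY = R \<inter> Y \<times> Y"
      have eX: "equiv X RX" "X // RX = {Z \<in> (X \<union> Y) // R. Z \<subseteq> X}"
        using restrict_equiv[OF e _ dichX] unfolding RX_def by auto
      have eY: "equiv Y RY" "Y // RY = {Z \<in> (X \<union> Y) // R. Z \<subseteq> Y}"
        using restrict_equiv[OF e _ dichY] unfolding RY_def by auto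
      have RU: "R = RX \<union> RY"
      proof
        show "RX \<union> RY \<subseteq> R" by (auto simp: RX_def RY_def)
        show "R \<subseteq> RX \<union> RY"
        proof
          fix z assume z: "z \<in> R"
          then obtain a b where ab: "z = (a, b)" "(a, b) \<in> R" by (cases z) auto
          then have a: "a \<in> X \<union> Y" using equiv_type[OF e] by blast
          have Z: "R `` {a} \<in> (X \<union> Y) // R" "a \<in> R `` {a}" "b \<in> R `` {a}"
            using a ab quotientI[OF a, of R] equiv_class_self[OF e a] by auto
          have "R `` {a} \<subseteq> X \<or> R `` {a} \<subseteq> Y" using dichX[OF Z(1)] in_quotient_imp_subset[OF e Z(1)] by blast
          then show "z \<in> RX \<union> RY" using Z ab by (auto simp: RX_def RY_def)
        qed
      qed
      have indX: "\<forall>Z\<in>X // RX. indec Z f"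
      proof
        fix Z assume Z: "Z \<in> X // RX"
        then have "Z \<subseteq> X" "Z \<in> (X \<union> Y) // R" using eX by auto
        then show "indec Z f" using h_X[of X Y f g, OF d f0 g0] ind indec_cong[of Z ?h f] by auto
      qed
      have indY: "\<forall>Z\<in>Y // RY. indec Z g"
      proof
        fix Z assume Z: "Z \<in> Y // RY"
        then have "Z \<subseteq> Y" "Z \<in> (X \<union> Y) // R" using eY by auto
        then show "indec Z g" using h_Y[of X Y f g, OF d f0 g0] ind indec_cong[of Z ?h g] by auto
      qed
      have s: "ic (X // RX) (quotf X RX f) + ic (Y // RY) (quotf Y RY g) = ic X f + ic Y g"
        using star_quot[of X Y f g, OF d f0 g0 fX fY eX(1) eY(1)] RU icq ih by simp
      have l1: "ic X f \<le> ic (X // RX) (quotf X RX f)" using quot_ic(2)[OF fX f0 eX(1) indX] .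
      have l2: "ic Y g \<le> ic (Y // RY) (quotf Y RY g)" using quot_ic(2)[OF fY g0 eY(1) indY] .
      have "RX \<in> ES X f" using ESf eX(1) indX l1 l2 s by simp
      moreover have "RY \<in> ES Y g" using ESg eY(1) indY l1 l2 s by simp
      ultimately show "R \<in> {RX \<union> RY | RX RY. RX \<in> ES X f \<and> RY \<in> ES Y g}" using RU by blast
    qed
  qed
qed


context
  fixes X :: "'a set" and f :: "'a set \<Rightarrow> int" and R R' :: "('a \<times> 'a) set"
  assumes fin: "finite X" and f0: "f {} = 0" and e: "equiv X R" and e': "equiv X R'" and sub: "R \<subseteq> R'"
begin

lemma G1: "Y \<in> X // R \<Longrightarrow> W \<in> X // R' \<Longrightarrow> Y \<subseteq> W \<or> Y \<inter> W = {}"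
proof -
  assume Y: "Y \<in> X // R" and W: "W \<in> X // R'"
  obtain y where y: "y \<in> X" "Y = R `` {y}" using Y by (auto elim: quotientE)
  obtain w where w: "w \<in> X" "W = R' `` {w}" using W by (auto elim: quotientE)
  show ?thesis
  proof (cases "Y \<inter> W = {}")
    case False
    then obtain z where z: "(y, z) \<in> R" "(w, z) \<in> R'" using y w by auto
    have "t \<in> W" if "t \<in> Y" for t
    proof -
      have "(y, t) \<in> R'" using that y sub by auto
      moreover have "(z, y) \<in> R'" using z sub e' by (auto simp: equiv_def sym_def)
      ultimately have "(w, t) \<in> R'" using z(2) e' by (meson equivE transD)
      then show ?thesis using w by simp
    qed
    then show ?thesis by blast
  qed simp
qed

lemma G1': "Y \<in> X // R \<Longrightarrow> \<exists>W\<in>X // R'. Y \<subseteq> W"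
proof -
  assume Y: "Y \<in> X // R"
  obtain y where y: "y \<in> X" "Y = R `` {y}" using Y by (auto elim: quotientE)
  then show ?thesis using sub by (intro bexI[of _ "R' `` {y}"]) (auto intro: quotientI)
qed

lemma G2: "W \<in> X // R' \<Longrightarrow> \<Union>(blk X R W) = W"
  using blk_union[OF e in_quotient_imp_subset[OF e']] G1 by blast

lemma G3p: "partition_on (X // R) (blk X R ` (X // R'))"
proof (rule partition_onI)
  show "\<Union>(blk X R ` (X // R')) = X // R"
  proof
    show "\<Union>(blk X R ` (X // R')) \<subseteq> X // R" by (auto simp: blk_def)
    show "X // R \<subseteq> \<Union>(blk X R ` (X // R'))"
    proof
      fix Y assume Y: "Y \<in> X // R"
      then obtain W where "W \<in> X // R'" "Y \<subseteq> W" using G1' by blast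
      then show "Y \<in> \<Union>(blk X R ` (X // R'))" using Y by (auto simp: blk_def)
    qed
  qed
  show "{} \<notin> blk X R ` (X // R')" using G2 in_quotient_imp_non_empty[OF e'] by force
  fix p q assume pq: "p \<in> blk X R ` (X // R')" "q \<in> blk X R ` (X // R')" "p \<noteq> q"
  then obtain W1 W2 where W: "W1 \<in> X // R'" "W2 \<in> X // R'" "p = blk X R W1" "q = blk X R W2" by blast
  then have "W1 \<noteq> W2" using pq by auto
  then have dj: "W1 \<inter> W2 = {}" using quotient_disj[OF e' W(1,2)] by simp
  have "Y \<notin> q" if "Y \<in> p" for Y
  proof
    assume "Y \<in> q"
    then have "Y \<subseteq> W1 \<inter> W2" "Y \<in> X // R" using that W by (auto simp: blk_def)
    then show False using dj in_quotient_imp_non_empty[OF e] by blast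
  qed
  then show "disjnt p q" by (auto simp: disjnt_def)
qed

lemma G3r: "bar_rel X R R' = prel (blk X R ` (X // R'))"
proof
  show "bar_rel X R R' \<subseteq> prel (blk X R ` (X // R'))"
  proof
    fix z assume "z \<in> bar_rel X R R'"
    then obtain x y where z: "z = (R `` {x}, R `` {y})" "x \<in> X" "y \<in> X" "(x, y) \<in> R'"
      by (auto simp: bar_rel_def Defs.proj_def)
    have W: "R' `` {x} \<in> X // R'" using z quotientI by metis
    have s1: "R `` {x} \<subseteq> R' `` {x}" using sub by auto
    have s2: "R `` {y} \<subseteq> R' `` {x}"
    proof
      fix t assume "t \<in> R `` {y}"
      then have "(y, t) \<in> R'" using sub by auto
      then show "t \<in> R' `` {x}" using z(4) e' by (meson Image_singleton_iff equivE transD)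
    qed
    have "R `` {x} \<in> blk X R (R' `` {x})" "R `` {y} \<in> blk X R (R' `` {x})"
      using s1 s2 z quotientI by (auto simp: blk_def)
    then show "z \<in> prel (blk X R ` (X // R'))" using W z(1) by (auto simp: prel_def)
  qed
  show "prel (blk X R ` (X // R')) \<subseteq> bar_rel X R R'"
  proof
    fix z assume "z \<in> prel (blk X R ` (X // R'))"
    then obtain Y1 Y2 W where z: "z = (Y1, Y2)" "W \<in> X // R'" "Y1 \<in> blk X R W" "Y2 \<in> blk X R W"
      by (auto simp: prel_def)
    obtain x where x: "x \<in> X" "Y1 = R `` {x}" using z(3) by (auto simp: blk_def elim: quotientE)
    obtain y where y: "y \<in> X" "Y2 = R `` {y}" using z(4) by (auto simp: blk_def elim: quotientE)
    obtain w where w: "w \<in> X" "W = R' `` {w}" using z(2) by (auto elim: quotientE)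
    have "x \<in> W" "y \<in> W" using x y z(3,4) equiv_class_self[OF e] by (auto simp: blk_def)
    then have "(w, x) \<in> R'" "(w, y) \<in> R'" using w by auto
    then have "(x, y) \<in> R'" using e' by (meson equivE symD transD)
    then show "z \<in> bar_rel X R R'" using x y z(1) by (auto simp: bar_rel_def Defs.proj_def)
  qed
qed

lemma G3: "equiv (X // R) (bar_rel X R R')" "(X // R) // bar_rel X R R' = blk X R ` (X // R')"
  using prel_partition[OF G3p] G3r by auto

lemma G4: "inj_on (blk X R) (X // R')"
  using G2 by (metis inj_onI)

lemma G5: "ic ((X // R) // bar_rel X R R') (quotf (X // R) (bar_rel X R R') (quotf X R f)) =
    ic (X // R') (quotf X R' f)"
proof -
  let ?g = "quotf (X // R) (bar_rel X R R') (quotf X R f)"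
  have gf: "?g (blk X R ` A) = quotf X R' f A" if A: "A \<subseteq> X // R'" for A
  proof -
    have s1: "blk X R ` A \<subseteq> (X // R) // bar_rel X R R'" using A G3(2) by auto
    have s2: "\<Union>(blk X R ` A) \<subseteq> X // R" by (auto simp: blk_def)
    have u1: "\<Union>(\<Union>(blk X R ` A)) = (\<Union>W\<in>A. \<Union>(blk X R W))" by blast
    have u2: "(\<Union>W\<in>A. \<Union>(blk X R W)) = (\<Union>W\<in>A. W)" using G2 A by (intro SUP_cong) auto
    have u: "\<Union>(\<Union>(blk X R ` A)) = \<Union>A" using u1 u2 by simp
    have "?g (blk X R ` A) = quotf X R f (\<Union>(blk X R ` A))" using quotf_eq[OF G3(1) s1] .
    also have "\<dots> = f (\<Union>A)" using quotf_eq[OF e s2] u by simp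
    also have "\<dots> = quotf X R' f A" using quotf_eq[OF e' A] by simp
    finally show ?thesis .
  qed
  have "ic (blk X R ` (X // R')) ?g = ic (X // R') (quotf X R' f)"
    using transport[of "blk X R" "X // R'" ?g "quotf X R' f", OF G4 gf fin_quot[OF fin e'] quotf_0[of f, OF f0]]
    by blast
  then show ?thesis using G3(2) by simp
qed

lemma G7: "Y \<in> X // R \<Longrightarrow> indec Y (condf X R' f) \<longleftrightarrow> indec Y f"
proof -
  assume Y: "Y \<in> X // R"
  then obtain W where W: "W \<in> X // R'" "Y \<subseteq> W" using G1' by blast
  show ?thesis
    using condf_agree[of X f R' W, OF fin f0 e' W(1)] W(2) by (intro indec_cong) auto
qed

lemma G6: "ic (X // R) (quotf X R (condf X R' f)) = (\<Sum>W\<in>X // R'. ic (blk X R W) (quotf X R f))"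
proof -
  let ?c = "condf X R' f"
  let ?q = "quotf X R ?c"
  have q0: "?q {} = 0" using quotf_0[of ?c, OF condf_0[of f, OF f0]] .
  have sB: "\<forall>Z\<in>blk X R ` (X // R'). sep (X // R) ?q Z"
  proof
    fix Z assume "Z \<in> blk X R ` (X // R')"
    then obtain W where W: "W \<in> X // R'" "Z = blk X R W" by blast
    have "sep (\<Union>(X // R)) ?c (\<Union>Z)" using W G2 condf_sep[OF fin, of f, OF f0 e'] Union_quotient[OF e] by simp
    then show "sep (X // R) ?q Z" using quot_sep[OF e subset_refl] W(2) by (auto simp: blk_def)
  qed
  have "ic (X // R) ?q = (\<Sum>Z\<in>blk X R ` (X // R'). ic Z ?q)"
    using ic_sum[OF fin_quot[OF fin e], of ?q, OF q0 G3p sB] .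
  also have "\<dots> = (\<Sum>W\<in>X // R'. ic (blk X R W) ?q)" using sum.reindex[OF G4] by simp
  also have "\<dots> = (\<Sum>W\<in>X // R'. ic (blk X R W) (quotf X R f))"
  proof (rule sum.cong[OF refl], rule ic_cong)
    fix W B assume W: "W \<in> X // R'" and B: "B \<subseteq> blk X R W"
    have B': "B \<subseteq> X // R" using B by (auto simp: blk_def)
    have u: "\<Union>B \<subseteq> W" using B by (auto simp: blk_def)
    have "?q B = ?c (\<Union>B)" using quotf_eq[OF e B'] .
    also have "\<dots> = f (\<Union>B)" using condf_agree[of X f R' W, OF fin f0 e' W u] .
    also have "\<dots> = quotf X R f B" using quotf_eq[OF e B'] by simp
    finally show "?q B = quotf X R f B" .
  qed
  finally show ?thesis .
qed

lemma G8:
  assumes a1: "\<forall>Y\<in>X // R. indec Y f" and a3: "\<forall>W\<in>X // R'. indec (blk X R W) (quotf X R f)"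
    and W: "W \<in> X // R'"
  shows "indec W f"
  unfolding indec_def
proof (intro conjI allI impI)
  show "W \<noteq> {}" using in_quotient_imp_non_empty[OF e' W] .
  fix T assume T: "sep W f T"
  have WX: "W \<subseteq> X" using in_quotient_imp_subset[OF e' W] .
  have dich: "Y \<subseteq> T \<or> Y \<inter> T = {}" if "Y \<in> blk X R W" for Y
    using indec_sep_dich[OF T, of Y] that a1 by (auto simp: blk_def)
  define TT where "TT = {Y \<in> blk X R W. Y \<subseteq> T}"
  have uT: "\<Union>TT = T"
  proof
    show "\<Union>TT \<subseteq> T" by (auto simp: TT_def)
    show "T \<subseteq> \<Union>TT"
    proof
      fix t assume t: "t \<in> T"
      then have "t \<in> W" using T by (auto simp: sep_def)
      then obtain Y where Y: "Y \<in> blk X R W" "t \<in> Y" using G2[OF W] by blast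
      then have "Y \<subseteq> T" using dich[OF Y(1)] t by blast
      then show "t \<in> \<Union>TT" using Y by (auto simp: TT_def)
    qed
  qed
  have bsub: "blk X R W \<subseteq> X // R" by (auto simp: blk_def)
  have "sep (\<Union>(blk X R W)) f (\<Union>TT)" using G2[OF W] uT T by simp
  then have "sep (blk X R W) (quotf X R f) TT" using quot_sep[OF e bsub, of TT f] by (auto simp: TT_def)
  then have "TT = {} \<or> TT = blk X R W" using a3 W by (auto simp: indec_def)
  then show "T = {} \<or> T = W" using uT G2[OF W] by auto
qed

lemma part2_main:
  "(R \<in> ES X f \<and> bar_rel X R R' \<in> ES (X // R) (quotf X R f)) \<longleftrightarrow>
   (R' \<in> ES X f \<and> R \<in> ES X (condf X R' f))"
proof -
  let ?P = "X // R" and ?P' = "X // R'" and ?g = "quotf X R f" and ?c = "condf X R' f"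
  have fP: "finite ?P" using fin_quot[OF fin e] .
  have fP': "finite ?P'" using fin_quot[OF fin e'] .
  have g0: "?g {} = 0" using quotf_0[of f, OF f0] .
  have c0: "?c {} = 0" using condf_0[of f, OF f0] .
  have A1: "R \<in> ES X f \<longleftrightarrow> (\<forall>Y\<in>?P. indec Y f) \<and> ic ?P ?g = ic X f"
    using ES_iff[of X f, OF fin f0] e by simp
  have A2: "bar_rel X R R' \<in> ES ?P ?g \<longleftrightarrow>
      (\<forall>W\<in>?P'. indec (blk X R W) ?g) \<and> ic ?P' (quotf X R' f) = ic ?P ?g"
    using ES_iff[of ?P ?g, OF fP g0] G3 G5 by simp
  have B1: "R' \<in> ES X f \<longleftrightarrow> (\<forall>W\<in>?P'. indec W f) \<and> ic ?P' (quotf X R' f) = ic X f"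
    using ES_iff[of X f, OF fin f0] e' by simp
  have icc: "ic X ?c = (\<Sum>W\<in>?P'. ic W f)" using ic_condf[of X f R', OF fin f0 e'] .
  have B2: "R \<in> ES X ?c \<longleftrightarrow> (\<forall>Y\<in>?P. indec Y f) \<and>
      (\<Sum>W\<in>?P'. ic (blk X R W) ?g) = (\<Sum>W\<in>?P'. ic W f)"
    using ES_iff[of X ?c, OF fin c0] e G7 G6 icc by auto
  have fW: "finite W" if "W \<in> ?P'" for W using in_quotient_imp_subset[OF e' that] fin finite_subset by blast
  have fb: "finite (blk X R W)" for W using fP by (rule finite_subset[rotated]) (auto simp: blk_def)
  have neb: "blk X R W \<noteq> {}" if "W \<in> ?P'" for W using G2[OF that] in_quotient_imp_non_empty[OF e' that] by auto
  have geb: "\<forall>W\<in>?P'. 1 \<le> ic (blk X R W) ?g"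
    using ic_indec(1)[of "blk X R _" ?g, OF fb g0 neb] by blast
  have icb: "\<forall>W\<in>?P'. ic (blk X R W) ?g = 1 \<longleftrightarrow> indec (blk X R W) ?g"
    using ic_indec(2)[of "blk X R _" ?g, OF fb g0 neb] by blast
  have icW: "\<forall>W\<in>?P'. ic W f = 1 \<longleftrightarrow> indec W f"
    using ic_indec(2)[of _ f, OF fW f0 in_quotient_imp_non_empty[OF e']] by blast
  have ineq1: "(\<forall>Y\<in>?P. indec Y f) \<Longrightarrow> ic X f \<le> ic ?P ?g" using quot_ic(2)[of X f R, OF fin f0 e] by blast
  have ineq2: "(\<forall>W\<in>?P'. indec (blk X R W) ?g) \<Longrightarrow> ic ?P ?g \<le> ic ?P' (quotf X R' f)"
    using quot_ic(2)[of ?P ?g "bar_rel X R R'", OF fP g0 G3(1)] G3(2) G5 by auto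
  show ?thesis
  proof
    assume a: "R \<in> ES X f \<and> bar_rel X R R' \<in> ES ?P ?g"
    have a1: "\<forall>Y\<in>?P. indec Y f" and a2: "ic ?P ?g = ic X f" using a A1 by auto
    have a3: "\<forall>W\<in>?P'. indec (blk X R W) ?g" and a4: "ic ?P' (quotf X R' f) = ic ?P ?g" using a A2 by auto
    have b1: "\<forall>W\<in>?P'. indec W f" using G8[OF a1 a3] by blast
    have "(\<Sum>W\<in>?P'. ic (blk X R W) ?g) = (\<Sum>W\<in>?P'. ic W f)"
      using a3 b1 icb icW by (intro sum.cong) auto
    then show "R' \<in> ES X f \<and> R \<in> ES X ?c" using B1 B2 a1 b1 a2 a4 by simp
  next
    assume b: "R' \<in> ES X f \<and> R \<in> ES X ?c"
    have b1: "\<forall>W\<in>?P'. indec W f" and b2: "ic ?P' (quotf X R' f) = ic X f" using b B1 by auto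
    have a1: "\<forall>Y\<in>?P. indec Y f" and b4: "(\<Sum>W\<in>?P'. ic (blk X R W) ?g) = (\<Sum>W\<in>?P'. ic W f)"
      using b B2 by auto
    have "(\<Sum>W\<in>?P'. ic W f) = (\<Sum>W\<in>?P'. 1)" using b1 icW by (intro sum.cong) auto
    then have "(\<Sum>W\<in>?P'. ic (blk X R W) ?g) = card ?P'" using b4 by simp
    then have "\<forall>W\<in>?P'. ic (blk X R W) ?g = 1" using sum_ge1(2)[OF fP' geb] by simp
    then have a3: "\<forall>W\<in>?P'. indec (blk X R W) ?g" using icb by blast
    have "ic X f \<le> ic ?P ?g" using ineq1[OF a1] .
    moreover have "ic ?P ?g \<le> ic ?P' (quotf X R' f)" using ineq2[OF a3] .
    ultimately have "ic ?P ?g = ic X f" "ic ?P' (quotf X R' f) = ic ?P ?g" using b2 by auto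
    then show "R \<in> ES X f \<and> bar_rel X R R' \<in> ES ?P ?g" using A1 A2 a1 a3 by simp
  qed
qed

end


lemma sep_edge:
  assumes "sep Y f T" "a \<in> Y" "b \<in> Y" "f {a, b} \<noteq> f {a} + f {b}"
  shows "a \<in> T \<longleftrightarrow> b \<in> T"
proof
  assume "a \<in> T"
  show "b \<in> T"
  proof (rule ccontr)
    assume "b \<notin> T"
    then show False using sep_pair[OF assms(1,2,3) \<open>a \<in> T\<close>] assms(4) by simp
  qed
next
  assume "b \<in> T"
  show "a \<in> T"
  proof (rule ccontr)
    assume "a \<notin> T"
    then have "f {b, a} = f {b} + f {a}" using sep_pair[OF assms(1,3,2) \<open>b \<in> T\<close>] by simp
    then show False using assms(4) by (simp add: insert_commute add.commute)
  qed
qed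

lemma pair_sep:
  assumes ab: "a \<noteq> b" and q0: "q {} = 0" and m: "q {a, b} = q {a} + q {b}"
  shows "sep {a, b} q {a}"
  unfolding sep_def
proof (intro conjI allI impI)
  fix B assume B: "B \<subseteq> {a, b}"
  then have "B = {} \<or> B = {a} \<or> B = {b} \<or> B = {a, b}" by auto
  then show "q B = q (B \<inter> {a}) + q (B - {a})"
  proof (elim disjE)
    assume "B = {a, b}"
    moreover have "{a, b} \<inter> {a} = {a}" "{a, b} - {a} = {b}" using ab by auto
    ultimately show ?thesis using m by simp
  qed (use q0 ab in auto)
qed simp

lemma ic2:
  assumes ab: "a \<noteq> b" and q0: "q {} = 0" and m: "q {a, b} = q {a} + q {b}"
  shows "ic {a, b} q = 2"
proof -
  have s1: "sep {a, b} q {a}" using pair_sep[OF ab q0 m] .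
  have "sep {b, a} q {b}" using pair_sep[of b a q] ab q0 m by (simp add: insert_commute add.commute)
  then have s2: "sep {a, b} q {b}" by (simp add: insert_commute)
  have "ic {a, b} q = card {a, b}" using ic_singletons[of "{a, b}" q] q0 s1 s2 by auto
  then show ?thesis using ab by simp
qed

lemma full_quot: "X \<noteq> {} \<Longrightarrow> equiv X (X \<times> X) \<and> X // (X \<times> X) = {X}"
proof -
  assume ne: "X \<noteq> {}"
  have p: "partition_on X {X}" using partition_on_space[OF ne] .
  have "prel {X} = X \<times> X" by (auto simp: prel_def)
  then show ?thesis using prel_partition[OF p] by simp
qed

lemma full_ES:
  assumes fin: "finite X" and f0: "f {} = 0" and ind: "indec X f"
  shows "X \<times> X \<in> ES X f"
proof -
  have ne: "X \<noteq> {}" using ind by (simp add: indec_def)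
  have q: "equiv X (X \<times> X)" "X // (X \<times> X) = {X}" using full_quot[OF ne] by auto
  have "ic {X} (quotf X (X \<times> X) f) = 1"
    using ic_indec(2)[of "{X}" "quotf X (X \<times> X) f"] indec_singleton quotf_0[of f, OF f0] by simp
  moreover have "ic X f = 1" using ic_indec(2)[of X f, OF fin f0 ne] ind by simp
  ultimately show ?thesis using ES_iff[of X f, OF fin f0] q ind by simp
qed

definition f1 :: "nat set \<Rightarrow> int" where
  "f1 A = (if A \<subseteq> {0, 1, 2} \<and> 0 \<in> A \<and> (1 \<in> A \<or> 2 \<in> A) then 1 else 0)"

definition f2 :: "nat set \<Rightarrow> int" where
  "f2 A = (if (A \<subseteq> {0, 1, 2} \<and> 0 \<in> A \<and> (1 \<in> A \<or> 2 \<in> A)) \<or> (2 \<in> A \<and> 3 \<in> A \<and> A \<subseteq> {2, 3})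
     then 1 else 0)"

lemma f1_indec: "indec {0, 1, 2} f1"
  unfolding indec_def
proof (intro conjI allI impI)
  fix T assume T: "sep {0, 1, 2} f1 T"
  have "0 \<in> T \<longleftrightarrow> 1 \<in> T" by (rule sep_edge[OF T]) (auto simp: f1_def)
  moreover have "0 \<in> T \<longleftrightarrow> 2 \<in> T" by (rule sep_edge[OF T]) (auto simp: f1_def)
  moreover have "T \<subseteq> {0, 1, 2}" using T by (simp add: sep_def)
  ultimately show "T = {} \<or> T = {0, 1, 2}" by auto
qed simp

lemma f2_indec3: "indec {0, 1, 2} f2"
  unfolding indec_def
proof (intro conjI allI impI)
  fix T assume T: "sep {0, 1, 2} f2 T"
  have "0 \<in> T \<longleftrightarrow> 1 \<in> T" by (rule sep_edge[OF T]) (auto simp: f2_def)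
  moreover have "0 \<in> T \<longleftrightarrow> 2 \<in> T" by (rule sep_edge[OF T]) (auto simp: f2_def)
  moreover have "T \<subseteq> {0, 1, 2}" using T by (simp add: sep_def)
  ultimately show "T = {} \<or> T = {0, 1, 2}" by auto
qed simp

lemma f2_indec4: "indec {0, 1, 2, 3} f2"
  unfolding indec_def
proof (intro conjI allI impI)
  fix T assume T: "sep {0, 1, 2, 3} f2 T"
  have "0 \<in> T \<longleftrightarrow> 1 \<in> T" by (rule sep_edge[OF T]) (auto simp: f2_def)
  moreover have "0 \<in> T \<longleftrightarrow> 2 \<in> T" by (rule sep_edge[OF T]) (auto simp: f2_def)
  moreover have "2 \<in> T \<longleftrightarrow> 3 \<in> T" by (rule sep_edge[OF T]) (auto simp: f2_def)
  moreover have "T \<subseteq> {0, 1, 2, 3}" using T by (simp add: sep_def)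
  ultimately show "T = {} \<or> T = {0, 1, 2, 3}" by auto
qed simp

lemma indec01: "indec {0, 1} f"  if "f {0, 1} \<noteq> f {0} + f {1}" for f :: "nat set \<Rightarrow> int"
  unfolding indec_def
proof (intro conjI allI impI)
  fix T assume T: "sep {0, 1} f T"
  have "0 \<in> T \<longleftrightarrow> 1 \<in> T" by (rule sep_edge[OF T]) (use that in auto)
  moreover have "T \<subseteq> {0, 1}" using T by (simp add: sep_def)
  ultimately show "T = {} \<or> T = {0, 1}" by auto
qed simp

lemma ex1:
  "\<exists>(X::nat set) Y f RX RY. finite X \<and> finite Y \<and> X \<inter> Y = {} \<and> bool_fun (X \<union> Y) f \<and>
      RX \<in> ES X (restr f X) \<and> RY \<in> ES Y (restr f Y) \<and> RX \<union> RY \<notin> ES (X \<union> Y) f"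
proof (intro exI conjI)
  let ?X = "{0, 1} :: nat set" and ?Y = "{2} :: nat set"
  let ?RX = "?X \<times> ?X" and ?RY = "Id_on ?Y"
  show "finite ?X" "finite ?Y" "?X \<inter> ?Y = {}" by auto
  show "bool_fun (?X \<union> ?Y) f1" by (auto simp: bool_fun_def f1_def)
  have i01: "indec ?X f1" by (rule indec01) (simp add: f1_def)
  have "indec ?X (restr f1 ?X)" using i01 by (subst indec_cong[of ?X _ f1]) (auto simp: restr_def)
  then show "?RX \<in> ES ?X (restr f1 ?X)" by (intro full_ES) (auto simp: restr_def f1_def)
  show "?RY \<in> ES ?Y (restr f1 ?Y)" by (intro Id_in_ES) (auto simp: restr_def f1_def)
  have eX: "equiv ?X ?RX" "?X // ?RX = {?X}" using full_quot[of ?X] by auto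
  have eY: "equiv ?Y ?RY" "?Y // ?RY = {?Y}" using equiv_Id_on' quot_Id_on[of ?Y] by auto
  have d: "?X \<inter> ?Y = {}" by auto
  have e: "equiv (?X \<union> ?Y) (?RX \<union> ?RY)" and q: "(?X \<union> ?Y) // (?RX \<union> ?RY) = {?X, ?Y}"
    using union_equiv[OF d eX(1) eY(1)] eX(2) eY(2) by auto
  let ?q = "quotf (?X \<union> ?Y) (?RX \<union> ?RY) f1"
  have v: "?q B = f1 (\<Union>B)" if "B \<subseteq> {?X, ?Y}" for B using quotf_eq[OF e] q that by simp
  have ne: "?X \<noteq> ?Y" by auto
  have "ic {?X, ?Y} ?q = 2"
  proof (rule ic2[OF ne])
    show "?q {} = 0" using v[of "{}"] by (simp add: f1_def)
    have "?q {?X, ?Y} = 1" using v[of "{?X, ?Y}"] by (simp add: f1_def)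
    moreover have "?q {?X} = 1" using v[of "{?X}"] by (simp add: f1_def)
    moreover have "?q {?Y} = 0" using v[of "{?Y}"] by (simp add: f1_def)
    ultimately show "?q {?X, ?Y} = ?q {?X} + ?q {?Y}" by simp
  qed
  moreover have "ic (?X \<union> ?Y) f1 = 1"
    using ic_indec(2)[of "?X \<union> ?Y" f1] f1_indec by (simp add: f1_def insert_commute)
  ultimately show "?RX \<union> ?RY \<notin> ES (?X \<union> ?Y) f1"
    using ES_iff[of "?X \<union> ?Y" f1] q by (simp add: f1_def)
qed

lemma ex2:
  "\<exists>(X::nat set) Y f RX RY. finite X \<and> finite Y \<and> X \<inter> Y = {} \<and> bool_fun (X \<union> Y) f \<and>
      equiv X RX \<and> equiv Y RY \<and>
      RX \<union> RY \<in> ES (X \<union> Y) f \<and> RX \<notin> ES X (restr f X)"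
proof -
  let ?X = "{0, 1, 2} :: nat set" and ?Y = "{3} :: nat set"
  let ?a = "{0, 1} :: nat set" and ?b = "{2} :: nat set" and ?c = "{3} :: nat set"
  let ?RX = "prel {?a, ?b}" and ?RY = "Id_on ?Y"
  have pX: "partition_on ?X {?a, ?b}" by (auto simp: partition_on_def pairwise_def disjnt_def)
  have eX: "equiv ?X ?RX" "?X // ?RX = {?a, ?b}" using prel_partition[OF pX] by auto
  have eY: "equiv ?Y ?RY" "?Y // ?RY = {?c}" using equiv_Id_on' quot_Id_on[of ?Y] by auto
  have d: "?X \<inter> ?Y = {}" by auto
  have e: "equiv (?X \<union> ?Y) (?RX \<union> ?RY)" and q: "(?X \<union> ?Y) // (?RX \<union> ?RY) = {?a, ?b, ?c}"
    using union_equiv[OF d eX(1) eY(1)] eX(2) eY(2) by auto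
  have U: "?X \<union> ?Y = {0, 1, 2, 3}" by auto
  have f20: "f2 {} = 0" by (simp add: f2_def)
  have bf: "bool_fun (?X \<union> ?Y) f2" by (auto simp: bool_fun_def f2_def)
  have in1: "?RX \<union> ?RY \<in> ES (?X \<union> ?Y) f2"
  proof -
    let ?q = "quotf (?X \<union> ?Y) (?RX \<union> ?RY) f2"
    have v: "?q B = f2 (\<Union>B)" if "B \<subseteq> {?a, ?b, ?c}" for B using quotf_eq[OF e] q that by simp
    have ind: "\<forall>Z\<in>{?a, ?b, ?c}. indec Z f2"
      using indec01[of f2] indec_singleton by (auto simp: f2_def)
    have iq: "indec {?a, ?b, ?c} ?q"
      unfolding indec_def
    proof (intro conjI allI impI)
      fix T assume T: "sep {?a, ?b, ?c} ?q T"
      have "?a \<in> T \<longleftrightarrow> ?c \<in> T"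
      proof (rule sep_edge[OF T])
        have "?q {?a, ?c} = 0" using v[of "{?a, ?c}"] by (simp add: f2_def)
        moreover have "?q {?a} = 1" using v[of "{?a}"] by (simp add: f2_def)
        moreover have "?q {?c} = 0" using v[of "{?c}"] by (simp add: f2_def)
        ultimately show "?q {?a, ?c} \<noteq> ?q {?a} + ?q {?c}" by simp
      qed auto
      moreover have "?b \<in> T \<longleftrightarrow> ?c \<in> T"
      proof (rule sep_edge[OF T])
        have "?q {?b, ?c} = 1" using v[of "{?b, ?c}"] by (simp add: f2_def)
        moreover have "?q {?b} = 0" using v[of "{?b}"] by (simp add: f2_def)
        moreover have "?q {?c} = 0" using v[of "{?c}"] by (simp add: f2_def)
        ultimately show "?q {?b, ?c} \<noteq> ?q {?b} + ?q {?c}" by simp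
      qed auto
      moreover have "T \<subseteq> {?a, ?b, ?c}" using T by (simp add: sep_def)
      ultimately show "T = {} \<or> T = {?a, ?b, ?c}" by blast
    qed simp
    have "ic {?a, ?b, ?c} ?q = 1"
      using ic_indec(2)[of "{?a, ?b, ?c}" ?q] iq quotf_0[of f2, OF f20] by simp
    moreover have "ic (?X \<union> ?Y) f2 = 1"
      using ic_indec(2)[of "?X \<union> ?Y" f2] f2_indec4 f20 U by simp
    ultimately show ?thesis using ES_iff[of "?X \<union> ?Y" f2] q e ind f20 by simp
  qed
  have out: "?RX \<notin> ES ?X (restr f2 ?X)"
  proof -
    let ?q = "quotf ?X ?RX (restr f2 ?X)"
    have v: "?q B = f2 (\<Union>B)" if "B \<subseteq> {?a, ?b}" for B
    proof -
      have "\<Union>B \<subseteq> ?X" using that by auto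
      then show ?thesis using quotf_eq[OF eX(1), of B "restr f2 ?X"] eX(2) that by (simp add: restr_def)
    qed
    have ne: "?a \<noteq> ?b" by auto
    have "ic {?a, ?b} ?q = 2"
    proof (rule ic2[OF ne])
      show "?q {} = 0" using v[of "{}"] by (simp add: f2_def)
      have "?q {?a, ?b} = 1" using v[of "{?a, ?b}"] by (simp add: f2_def)
      moreover have "?q {?a} = 1" using v[of "{?a}"] by (simp add: f2_def)
      moreover have "?q {?b} = 0" using v[of "{?b}"] by (simp add: f2_def)
      ultimately show "?q {?a, ?b} = ?q {?a} + ?q {?b}" by simp
    qed
    moreover have "ic ?X (restr f2 ?X) = ic ?X f2" by (rule ic_cong) (simp add: restr_def)
    moreover have "ic ?X f2 = 1" using ic_indec(2)[of ?X f2] f2_indec3 f20 by simp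
    ultimately show ?thesis using ES_iff[of ?X "restr f2 ?X"] eX(2) f20 by (simp add: restr_def)
  qed
  show ?thesis
    by (rule exI[of _ ?X], rule exI[of _ ?Y], rule exI[of _ f2], rule exI[of _ ?RX], rule exI[of _ ?RY])
      (use d bf eX(1) eY(1) in1 out in simp)
qed


theorem theorem3p17:
  shows
  "(\<forall>(X::'a set) Y f g. finite X \<and> finite Y \<and> X \<inter> Y = {} \<and> bool_fun X f \<and> bool_fun Y g \<longrightarrow>
      ES (X \<union> Y) (star1 X Y f g) = {RX \<union> RY | RX RY. RX \<in> ES X f \<and> RY \<in> ES Y g})
   \<and>
   (\<forall>(X::'a set) f R R'. finite X \<and> bool_fun X f \<and> equiv X R \<and> equiv X R' \<and> R \<subseteq> R' \<longrightarrow>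
      ((R \<in> ES X f \<and> bar_rel X R R' \<in> ES (X // R) (quotf X R f)) \<longleftrightarrow>
       (R' \<in> ES X f \<and> R \<in> ES X (condf X R' f))))
   \<and>
   (\<forall>(X::'a set) f. finite X \<and> bool_fun X f \<longrightarrow>
      Id_on X \<in> ES X f \<and> ic_rel X f \<in> ES X f \<and>
      (\<forall>R\<in>ES X f. (modular X (condf X R f) \<longleftrightarrow> R = Id_on X) \<and>
                    (modular (X // R) (quotf X R f) \<longleftrightarrow> R = ic_rel X f)))
   \<and>
   (\<exists>(X::nat set) Y f RX RY. finite X \<and> finite Y \<and> X \<inter> Y = {} \<and> bool_fun (X \<union> Y) f \<and>
      RX \<in> ES X (restr f X) \<and> RY \<in> ES Y (restr f Y) \<and> RX \<union> RY \<notin> ES (X \<union> Y) f)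
   \<and>
   (\<exists>(X::nat set) Y f RX RY. finite X \<and> finite Y \<and> X \<inter> Y = {} \<and> bool_fun (X \<union> Y) f \<and>
      equiv X RX \<and> equiv Y RY \<and>
      RX \<union> RY \<in> ES (X \<union> Y) f \<and> RX \<notin> ES X (restr f X))"
proof (intro conjI)
  show "\<forall>(X::'a set) Y f g. finite X \<and> finite Y \<and> X \<inter> Y = {} \<and> bool_fun X f \<and> bool_fun Y g \<longrightarrow>
      ES (X \<union> Y) (star1 X Y f g) = {RX \<union> RY | RX RY. RX \<in> ES X f \<and> RY \<in> ES Y g}"
  proof (intro allI impI)
    fix X :: "'a set" and Y f g
    assume h: "finite X \<and> finite Y \<and> X \<inter> Y = {} \<and> bool_fun X f \<and> bool_fun Y g"
    show "ES (X \<union> Y) (star1 X Y f g) = {RX \<union> RY | RX RY. RX \<in> ES X f \<and> RY \<in> ES Y g}"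
      by (rule part1) (use h in auto)
  qed
  show "\<forall>(X::'a set) f R R'. finite X \<and> bool_fun X f \<and> equiv X R \<and> equiv X R' \<and> R \<subseteq> R' \<longrightarrow>
      ((R \<in> ES X f \<and> bar_rel X R R' \<in> ES (X // R) (quotf X R f)) \<longleftrightarrow>
       (R' \<in> ES X f \<and> R \<in> ES X (condf X R' f)))"
  proof (intro allI impI)
    fix X :: "'a set" and f R R'
    assume h: "finite X \<and> bool_fun X f \<and> equiv X R \<and> equiv X R' \<and> R \<subseteq> R'"
    then have f0: "f {} = 0" by (simp add: bool_fun_def)
    show "(R \<in> ES X f \<and> bar_rel X R R' \<in> ES (X // R) (quotf X R f)) \<longleftrightarrow>
       (R' \<in> ES X f \<and> R \<in> ES X (condf X R' f))"
      by (rule part2_main[of X f R R']) (use h f0 in auto)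
  qed
  show "\<forall>(X::'a set) f. finite X \<and> bool_fun X f \<longrightarrow>
      Id_on X \<in> ES X f \<and> ic_rel X f \<in> ES X f \<and>
      (\<forall>R\<in>ES X f. (modular X (condf X R f) \<longleftrightarrow> R = Id_on X) \<and>
                    (modular (X // R) (quotf X R f) \<longleftrightarrow> R = ic_rel X f))"
  proof (intro allI impI)
    fix X :: "'a set" and f
    assume h: "finite X \<and> bool_fun X f"
    show "Id_on X \<in> ES X f \<and> ic_rel X f \<in> ES X f \<and>
      (\<forall>R\<in>ES X f. (modular X (condf X R f) \<longleftrightarrow> R = Id_on X) \<and>
                    (modular (X // R) (quotf X R f) \<longleftrightarrow> R = ic_rel X f))"
      by (rule part3) (use h in auto)
  qed
  show "\<exists>(X::nat set) Y f RX RY. finite X \<and> finite Y \<and> X \<inter> Y = {} \<and> bool_fun (X \<union> Y) f \<and>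
      RX \<in> ES X (restr f X) \<and> RY \<in> ES Y (restr f Y) \<and> RX \<union> RY \<notin> ES (X \<union> Y) f"
    by (rule ex1)
  show "\<exists>(X::nat set) Y f RX RY. finite X \<and> finite Y \<and> X \<inter> Y = {} \<and> bool_fun (X \<union> Y) f \<and>
      equiv X RX \<and> equiv Y RY \<and>
      RX \<union> RY \<in> ES (X \<union> Y) f \<and> RX \<notin> ES X (restr f X)"
    by (rule ex2)
qed

end
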